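(* Let $F$ be a field of characteristic $0$, $V$ an $n$-dimensional $F$-vector space, $G\le\mathrm{GL}(V)$ a finite group generated by pseudo-reflections, and $M$ an $r$-dimensional $F[G]$-module with $M^G=0$. For $1\le i,j\le r$ let $L_{ij}\in\mathrm{S}(V)^G$ be the element with $d_i^*\delta_j^*+\delta_j^*d_i^*=\partial_{L_{ij}}$ on $\mathrm{S}(V^* )\otimes\wedge M^*$. Then each $L_{ij}$ is homogeneous of positive degree, and each $d_i^*$ maps $\mathcal{H}(\mathrm{S}(V^* )\otimes\wedge M^* )$ into itself.
   Context: $G$ acts contragrediently on $V^*,M^*$ and diagonally on tensor products of symmetric algebras $\mathrm{S}(\cdot)$ and exterior algebras $\wedge(\cdot)$. $(\mathrm{S}(V)\otimes M^* )^G$ and $(\mathrm{S}(V)\otimes M)^G$ are free $\mathrm{S}(V)^G$-modules with homogeneous bases $\tilde\omega_1^{M^*},\dots,\tilde\omega_r^{M^*}$ and $\tilde\omega_1^{M},\dots,\tilde\omega_r^{M}$ respectively. For $s\in\mathrm{S}(V)$, $\partial_s$ is the constant-coefficient differential operator on $\mathrm{S}(V^* )$ ($\partial_v$ the derivation with $\partial_v\lambda=\lambda(v)$, extended multiplicatively; $s\mapsto\partial_s$ is injective), acting as $\partial_s\otimes\mathrm{id}$. $\epsilon_\mu$ is left exterior multiplication by $\mu\in M^*$ and $\iota_m$ ($m\in M$) is the anti-derivation of $\wedge M^*$ with $\iota_m(\xi)=\xi(m)$. If $\tilde\omega_i^{M^*}=\sum_k s_k\otimes\mu_k$ then $d_i^*=\sum_k\partial_{s_k}\otimes\epsilon_{\mu_k}$;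 if $\tilde\omega_j^M=\sum_kt_k\otimes m_k$ then $\delta_j^*=\sum_k\partial_{t_k}\otimes\iota_{m_k}$. $\mathcal{J}_M\subset\mathrm{S}(V)\otimes\wedge M$ is the ideal generated by homogeneous $G$-invariants of positive degree. The pairing $\mathrm{S}(V^* )\otimes\wedge M^*\times\mathrm{S}(V)\otimes\wedge M\to F$ is $\langle f\otimes\nu,s\otimes\ell\rangle=\langle f,s\rangle\langle\nu,\ell\rangle$ with $\langle\lambda_1\cdots\lambda_k,v_1\cdots v_l\rangle=\delta_{kl}\sum_{\sigma\in\mathfrak{S}_k}\prod_i\lambda_i(v_{\sigma(i)})$ and $\langle\xi_1\wedge\cdots\wedge\xi_k,m_1\wedge\cdots\wedge m_l\rangle=\delta_{kl}\det(\xi_i(m_j))$; $\mathcal{H}(\mathrm{S}(V^* )\otimes\wedge M^* )=\{\omega:\langle\omega,\xi\rangle=0\ \forall\xi\in\mathcal{J}_M\}$. *)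

theory Defs
  imports "HOL-Analysis.Analysis" "HOL-Library.Poly_Mapping"
begin

text \<open>V = F^'n with standard basis e_k (k :: 'n); S(V) and S(V*) are both modelled as
 polynomials in variables indexed by 'n (variable k = e_k, resp. the dual coordinate x_k).
 M = F^'m with basis e_a (a :: 'm), M* with dual basis.\<close>

type_synonym ('a, 'n) sqmat = "(('a, 'n) vec, 'n) vec"

type_synonym ('a, 'v) mpoly = "('v \<Rightarrow>\<^sub>0 nat) \<Rightarrow>\<^sub>0 'a"

definition pconst :: "'a::zero \<Rightarrow> ('a, 'v) mpoly" where
  "pconst c = Poly_Mapping.single 0 c"

definition pvar :: "'v \<Rightarrow> ('a::zero_neq_one, 'v) mpoly" where
  "pvar k = Poly_Mapping.single (Poly_Mapping.single k 1) 1"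

definition mdeg :: "('v::finite \<Rightarrow>\<^sub>0 nat) \<Rightarrow> nat" where
  "mdeg \<alpha> = (\<Sum>k\<in>UNIV. Poly_Mapping.lookup \<alpha> k)"

definition homog_poly :: "nat \<Rightarrow> ('a::zero, 'v::finite) mpoly \<Rightarrow> bool" where
  "homog_poly d p \<longleftrightarrow> (\<forall>\<alpha>\<in>Poly_Mapping.keys p. mdeg \<alpha> = d)"

definition psubst :: "('v \<Rightarrow> ('a::comm_ring_1, 'w) mpoly) \<Rightarrow> ('a, 'v::finite) mpoly \<Rightarrow> ('a, 'w) mpoly" where
  "psubst \<sigma> p = (\<Sum>\<alpha>\<in>Poly_Mapping.keys p. pconst (Poly_Mapping.lookup p \<alpha>) * (\<Prod>k\<in>UNIV. \<sigma> k ^ Poly_Mapping.lookup \<alpha> k))"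

definition act_SV :: "'a::comm_ring_1^'n^'n \<Rightarrow> ('a, 'n::finite) mpoly \<Rightarrow> ('a, 'n) mpoly" where
  "act_SV g = psubst (\<lambda>k. \<Sum>l\<in>UNIV. pconst (g $ l $ k) * pvar l)"

definition SV_inv :: "('a::comm_ring_1^'n^'n) set \<Rightarrow> ('a, 'n::finite) mpoly set" where
  "SV_inv G = {p. \<forall>g\<in>G. act_SV g p = p}"

text \<open>S(V) \<otimes> M*: coefficient function w.r.t. the dual basis of M*; contragredient action\<close>
definition act_SVMs :: "'a::field^'n^'n \<Rightarrow> ('a^'n^'n \<Rightarrow> 'a^'m^'m)
    \<Rightarrow> ('m::finite \<Rightarrow> ('a, 'n::finite) mpoly) \<Rightarrow> ('m \<Rightarrow> ('a, 'n) mpoly)" where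
  "act_SVMs g \<rho> w = (\<lambda>b. \<Sum>a\<in>UNIV. pconst (matrix_inv (\<rho> g) $ a $ b) * act_SV g (w a))"

text \<open>S(V) \<otimes> M: coefficient function w.r.t. the basis of M\<close>
definition act_SVM :: "'a::field^'n^'n \<Rightarrow> ('a^'n^'n \<Rightarrow> 'a^'m^'m)
    \<Rightarrow> ('m::finite \<Rightarrow> ('a, 'n::finite) mpoly) \<Rightarrow> ('m \<Rightarrow> ('a, 'n) mpoly)" where
  "act_SVM g \<rho> w = (\<lambda>b. \<Sum>a\<in>UNIV. pconst (\<rho> g $ b $ a) * act_SV g (w a))"

definition SVMs_inv where
  "SVMs_inv G \<rho> = {w. \<forall>g\<in>G. act_SVMs g \<rho> w = w}"

definition SVM_inv where
  "SVM_inv G \<rho> = {w. \<forall>g\<in>G. act_SVM g \<rho> w = w}"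

section \<open>Exterior algebras (coefficients w.r.t. the basis e_A, A a set of indices, ordered increasingly)\<close>

definition shuffle_sign :: "'m::linorder set \<Rightarrow> 'm set \<Rightarrow> 'b::ring_1" where
  "shuffle_sign A B = (-1) ^ card {(a, b). a \<in> A \<and> b \<in> B \<and> b < a}"

definition wedge :: "('m::{finite,linorder} set \<Rightarrow> 'b::comm_ring_1) \<Rightarrow> ('m set \<Rightarrow> 'b) \<Rightarrow> ('m set \<Rightarrow> 'b)" where
  "wedge u w = (\<lambda>C. \<Sum>A\<in>Pow C. shuffle_sign A (C - A) * u A * w (C - A))"

definition ext_one :: "'m set \<Rightarrow> 'b::{zero,one}" where
  "ext_one = (\<lambda>C. if C = {} then 1 else 0)"

definition ext_vec :: "('m \<Rightarrow> 'b::zero) \<Rightarrow> 'm set \<Rightarrow> 'b" where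
  "ext_vec v = (\<lambda>C. if card C = 1 then v (the_elem C) else 0)"

text \<open>induced action of a matrix R on \<wedge>M: e_A \<mapsto> R e_{a1} \<and> ... \<and> R e_{ak}\<close>
definition ext_act :: "('a::comm_ring_1, 'm::{finite,linorder}) sqmat \<Rightarrow> 'm set \<Rightarrow> 'm set \<Rightarrow> 'a" where
  "ext_act R A = foldr (\<lambda>a acc. wedge (ext_vec (\<lambda>b. R $ b $ a)) acc) (sorted_list_of_set A) ext_one"

text \<open>S(V) \<otimes> \<wedge>M with diagonal action\<close>
definition act_SVLM :: "'a::field^'n^'n \<Rightarrow> ('a^'n^'n \<Rightarrow> ('a, 'm::{finite,linorder}) sqmat)
    \<Rightarrow> ('m set \<Rightarrow> ('a, 'n::finite) mpoly) \<Rightarrow> ('m set \<Rightarrow> ('a, 'n) mpoly)" where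
  "act_SVLM g \<rho> \<omega> = (\<lambda>C. \<Sum>A\<in>UNIV. pconst (ext_act (\<rho> g) A C) * act_SV g (\<omega> A))"

definition homog_form :: "nat \<Rightarrow> ('m set \<Rightarrow> ('a::zero, 'n::finite) mpoly) \<Rightarrow> bool" where
  "homog_form d \<omega> \<longleftrightarrow> (\<forall>A. \<forall>\<alpha>\<in>Poly_Mapping.keys (\<omega> A). mdeg \<alpha> + card A = d)"

text \<open>The ideal J_M of S(V) \<otimes> \<wedge>M generated by homogeneous G-invariants of positive degree\<close>
inductive_set JM :: "('a::field^'n^'n) set \<Rightarrow> ('a^'n^'n \<Rightarrow> ('a, 'm::{finite,linorder}) sqmat)
    \<Rightarrow> ('m set \<Rightarrow> ('a, 'n::finite) mpoly) set"
  for G \<rho> where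
  JM_zero: "(\<lambda>_. 0) \<in> JM G \<rho>"
| JM_add: "\<lbrakk>\<forall>g\<in>G. act_SVLM g \<rho> h = h; homog_form d h; d > 0; \<xi> \<in> JM G \<rho>\<rbrakk>
           \<Longrightarrow> (\<lambda>C. wedge c h C + \<xi> C) \<in> JM G \<rho>"

text \<open>partial derivative \<partial>_{e_k} = d/dx_k\<close>
definition pd :: "'n \<Rightarrow> ('a::comm_ring_1, 'n) mpoly \<Rightarrow> ('a, 'n) mpoly" where
  "pd k p = (\<Sum>\<alpha>\<in>Poly_Mapping.keys p. Poly_Mapping.single (\<alpha> - Poly_Mapping.single k 1)
                          (of_nat (Poly_Mapping.lookup \<alpha> k) * Poly_Mapping.lookup p \<alpha>))"

definition dmono :: "('n::{finite,linorder} \<Rightarrow>\<^sub>0 nat) \<Rightarrow> ('a::comm_ring_1, 'n) mpoly \<Rightarrow> ('a, 'n) mpoly" where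
  "dmono \<beta> = foldr (\<lambda>k f. (pd k ^^ Poly_Mapping.lookup \<beta> k) \<circ> f) (sorted_list_of_set UNIV) id"

definition dop :: "('a::comm_ring_1, 'n::{finite,linorder}) mpoly \<Rightarrow> ('a, 'n) mpoly \<Rightarrow> ('a, 'n) mpoly" where
  "dop s p = (\<Sum>\<beta>\<in>Poly_Mapping.keys s. pconst (Poly_Mapping.lookup s \<beta>) * dmono \<beta> p)"

definition Dform :: "('a::comm_ring_1, 'n::{finite,linorder}) mpoly \<Rightarrow> ('m set \<Rightarrow> ('a, 'n) mpoly) \<Rightarrow> ('m set \<Rightarrow> ('a, 'n) mpoly)" where
  "Dform s \<omega> = (\<lambda>A. dop s (\<omega> A))"

text \<open>left exterior multiplication by the dual basis vector e*_a\<close>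
definition eps :: "'m::linorder \<Rightarrow> ('m set \<Rightarrow> 'b::ring_1) \<Rightarrow> ('m set \<Rightarrow> 'b)" where
  "eps a \<omega> = (\<lambda>B. if a \<in> B then (-1) ^ card {c\<in>B. c < a} * \<omega> (B - {a}) else 0)"

text \<open>contraction (anti-derivation) \<iota>_{e_a}\<close>
definition iota :: "'m::linorder \<Rightarrow> ('m set \<Rightarrow> 'b::ring_1) \<Rightarrow> ('m set \<Rightarrow> 'b)" where
  "iota a \<omega> = (\<lambda>B. if a \<notin> B then (-1) ^ card {c\<in>B. c < a} * \<omega> (insert a B) else 0)"

text \<open>d*_i for \<omega>~_i = \<Sum>_a s_a \<otimes> e*_a\<close>
definition dstar :: "('m::{finite,linorder} \<Rightarrow> ('a::comm_ring_1, 'n::{finite,linorder}) mpoly)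
    \<Rightarrow> ('m set \<Rightarrow> ('a, 'n) mpoly) \<Rightarrow> ('m set \<Rightarrow> ('a, 'n) mpoly)" where
  "dstar w \<omega> = (\<lambda>B. \<Sum>a\<in>UNIV. eps a (Dform (w a) \<omega>) B)"

text \<open>\<delta>*_j for \<omega>~_j = \<Sum>_a t_a \<otimes> e_a\<close>
definition deltastar :: "('m::{finite,linorder} \<Rightarrow> ('a::comm_ring_1, 'n::{finite,linorder}) mpoly)
    \<Rightarrow> ('m set \<Rightarrow> ('a, 'n) mpoly) \<Rightarrow> ('m set \<Rightarrow> ('a, 'n) mpoly)" where
  "deltastar w \<omega> = (\<lambda>B. \<Sum>a\<in>UNIV. iota a (Dform (w a) \<omega>) B)"

definition mono_list :: "('n::{finite,linorder} \<Rightarrow>\<^sub>0 nat) \<Rightarrow> 'n list" where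
  "mono_list \<alpha> = concat (map (\<lambda>k. replicate (Poly_Mapping.lookup \<alpha> k) k) (sorted_list_of_set UNIV))"

text \<open>\<langle>x^\<alpha>, y^\<beta>\<rangle> = \<Sum>_\<sigma> \<Prod>_i x_{k_i}(e_{l_\<sigma>(i)})\<close>
definition sym_pair :: "('n::{finite,linorder} \<Rightarrow>\<^sub>0 nat) \<Rightarrow> ('n \<Rightarrow>\<^sub>0 nat) \<Rightarrow> 'a::comm_ring_1" where
  "sym_pair \<alpha> \<beta> = (let xs = mono_list \<alpha>; ys = mono_list \<beta> in
     if length xs = length ys then
       (\<Sum>\<sigma>\<in>{\<sigma>. \<sigma> permutes {..<length xs}}. \<Prod>i<length xs. of_bool (xs ! i = ys ! (\<sigma> i)))
     else 0)"

text \<open>\<langle>e*_A, e_B\<rangle> = det(e*_{a_i}(e_{b_j}))\<close>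
definition ext_pair :: "'m::{finite,linorder} set \<Rightarrow> 'm set \<Rightarrow> 'a::comm_ring_1" where
  "ext_pair A B = (let as = sorted_list_of_set A; bs = sorted_list_of_set B in
     if length as = length bs then
       (\<Sum>\<sigma>\<in>{\<sigma>. \<sigma> permutes {..<length as}}. of_int (sign \<sigma>) * (\<Prod>i<length as. of_bool (as ! i = bs ! (\<sigma> i))))
     else 0)"

definition pairing :: "('m::{finite,linorder} set \<Rightarrow> ('a::comm_ring_1, 'n::{finite,linorder}) mpoly)
    \<Rightarrow> ('m set \<Rightarrow> ('a, 'n) mpoly) \<Rightarrow> 'a" where
  "pairing \<omega> \<xi> = (\<Sum>A\<in>UNIV. \<Sum>B\<in>UNIV. ext_pair A B *
      (\<Sum>\<alpha>\<in>Poly_Mapping.keys (\<omega> A). \<Sum>\<beta>\<in>Poly_Mapping.keys (\<xi> B). Poly_Mapping.lookup (\<omega> A) \<alpha> * Poly_Mapping.lookup (\<xi> B) \<beta> * sym_pair \<alpha> \<beta>))"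

definition harmonics where
  "harmonics G \<rho> = {\<omega>. \<forall>\<xi>\<in>JM G \<rho>. pairing \<omega> \<xi> = 0}"

definition pseudo_reflection :: "'a::field^'n^'n \<Rightarrow> bool" where
  "pseudo_reflection g \<longleftrightarrow> invertible g \<and> g \<noteq> mat 1 \<and>
     (\<exists>\<phi>::'a^'n. \<phi> \<noteq> 0 \<and> (\<forall>v. (\<Sum>k\<in>UNIV. \<phi> $ k * v $ k) = 0 \<longrightarrow> g *v v = v))"

inductive_set gen_group :: "('a::field^'n^'n) set \<Rightarrow> ('a^'n^'n) set" for R where
  "mat 1 \<in> gen_group R"
| "r \<in> R \<Longrightarrow> r \<in> gen_group R"
| "r \<in> R \<Longrightarrow> matrix_inv r \<in> gen_group R"
| "x \<in> gen_group R \<Longrightarrow> y \<in> gen_group R \<Longrightarrow> x ** y \<in> gen_group R"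

definition finite_matrix_group :: "('a::field^'n^'n) set \<Rightarrow> bool" where
  "finite_matrix_group G \<longleftrightarrow> finite G \<and> (\<forall>g\<in>G. invertible g) \<and> mat 1 \<in> G
     \<and> (\<forall>g\<in>G. \<forall>h\<in>G. g ** h \<in> G) \<and> (\<forall>g\<in>G. matrix_inv g \<in> G)"

definition matrix_rep :: "('a::field^'n^'n) set \<Rightarrow> ('a^'n^'n \<Rightarrow> 'a^'m^'m) \<Rightarrow> bool" where
  "matrix_rep G \<rho> \<longleftrightarrow> \<rho> (mat 1) = mat 1 \<and> (\<forall>g\<in>G. \<forall>h\<in>G. \<rho> (g ** h) = \<rho> g ** \<rho> h)"

definition homog_free_basis :: "('a::field^'n^'n) set \<Rightarrow> ('m::finite \<Rightarrow> ('a, 'n::finite) mpoly) set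
     \<Rightarrow> ('i::finite \<Rightarrow> 'm \<Rightarrow> ('a, 'n) mpoly) \<Rightarrow> bool" where
  "homog_free_basis G Inv w \<longleftrightarrow> (\<forall>i. w i \<in> Inv) \<and> (\<forall>i. \<exists>d. \<forall>a. homog_poly d (w i a))
     \<and> (\<forall>x\<in>Inv. \<exists>!f. (\<forall>i. f i \<in> SV_inv G) \<and> x = (\<lambda>a. \<Sum>i\<in>UNIV. f i * w i a))"

end

theory Submission
  imports Defs
begin

abbreviation lk where "lk \<equiv> Poly_Mapping.lookup"
abbreviation kz where "kz \<equiv> Poly_Mapping.keys"
abbreviation sgl where "sgl \<equiv> Poly_Mapping.single"

lemma lookup_pconst: "lk (pconst c) \<alpha> = (if \<alpha> = 0 then c else 0)"
  by (simp add: pconst_def lookup_single when_def)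

lemma pconst_0[simp]: "pconst 0 = 0" by (simp add: pconst_def)
lemma pconst_1: "pconst 1 = 1" by (simp add: pconst_def)
lemma pconst_add: "pconst (a+b) = pconst a + pconst b" by (simp add: pconst_def single_add)
lemma pconst_mult: "pconst ((a::'a::comm_ring_1)*b) = pconst a * pconst b" by (simp add: pconst_def mult_single)
lemma pconst_minus: "pconst (-(a::'a::ab_group_add)) = - pconst a" by (simp add: pconst_def single_uminus)
lemma pconst_sum: "pconst (sum f S) = (\<Sum>x\<in>S. pconst (f x))"
  by (induct S rule: infinite_finite_induct) (auto simp: pconst_add)
lemma pconst_inj: "pconst a = pconst b \<Longrightarrow> a = b"
  by (metis lookup_pconst)

lemma lk_pconst_mult: "lk (pconst (c::'a::comm_ring_1) * p) \<alpha> = c * lk p \<alpha>"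
proof -
  have "pconst c * p = Poly_Mapping.map ((*) c) p" by (simp add: mult_map_scale_conv_mult pconst_def)
  then show ?thesis by (simp add: Poly_Mapping.map.rep_eq when_def)
qed

lemma poly_sum_single: "p = (\<Sum>\<alpha>\<in>kz p. sgl \<alpha> (lk p \<alpha>))"
  by (rule poly_mapping_eqI) (auto simp: lookup_sum lookup_single when_def in_keys_iff)

lemma mono_sum_single: "(\<beta>::'n::finite \<Rightarrow>\<^sub>0 nat) = (\<Sum>k\<in>UNIV. sgl k (lk \<beta> k))"
  by (rule poly_mapping_eqI) (auto simp: lookup_sum lookup_single when_def)

lemma mdeg_add: "mdeg (\<alpha> + \<beta>) = mdeg \<alpha> + mdeg \<beta>"
  by (simp add: mdeg_def lookup_add sum.distrib)

lemma mdeg_0[simp]: "mdeg 0 = 0" by (simp add: mdeg_def)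

lemma mdeg_0_iff: "mdeg (\<alpha>::'n::finite \<Rightarrow>\<^sub>0 nat) = 0 \<longleftrightarrow> \<alpha> = 0"
  by (auto simp: mdeg_def poly_mapping_eq_iff fun_eq_iff)

section \<open>derivatives\<close>

lemma lk_pd: "lk (pd k p) \<gamma> = of_nat (lk \<gamma> k + 1) * lk p (\<gamma> + sgl k 1)"
proof -
  have "lk (pd k p) \<gamma> = (\<Sum>\<alpha>\<in>kz p. if \<alpha> - sgl k 1 = \<gamma> then of_nat (lk \<alpha> k) * lk p \<alpha> else 0)"
    by (simp add: pd_def lookup_sum lookup_single when_def)
  also have "\<dots> = (\<Sum>\<alpha>\<in>kz p. if \<alpha> = \<gamma> + sgl k 1 then of_nat (lk \<alpha> k) * lk p \<alpha> else 0)"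
  proof (rule sum.cong[OF refl])
    fix \<alpha> assume "\<alpha> \<in> kz p"
    show "(if \<alpha> - sgl k 1 = \<gamma> then of_nat (lk \<alpha> k) * lk p \<alpha> else 0)
        = (if \<alpha> = \<gamma> + sgl k 1 then of_nat (lk \<alpha> k) * lk p \<alpha> else 0)"
    proof (cases "lk \<alpha> k = 0")
      case True
      have "lk \<alpha> k \<noteq> lk (\<gamma> + sgl k 1) k" using True by (simp add: lookup_add)
      then have "\<alpha> \<noteq> \<gamma> + sgl k 1" by auto
      then show ?thesis using True by simp
    next
      case False
      have "\<alpha> - sgl k 1 = \<gamma> \<longleftrightarrow> \<alpha> = \<gamma> + sgl k 1"
        using False by (auto simp: poly_mapping_eq_iff fun_eq_iff lookup_add lookup_single lookup_minus when_def)
      then show ?thesis by simp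
    qed
  qed
  also have "\<dots> = of_nat (lk \<gamma> k + 1) * lk p (\<gamma> + sgl k 1)"
    by (auto simp: lookup_add in_keys_iff)
  finally show ?thesis .
qed

fun riseN :: "nat \<Rightarrow> nat \<Rightarrow> nat" where
  "riseN g 0 = 1"
| "riseN g (Suc m) = (g + 1) * riseN (g + 1) m"

lemma fact_riseN: "fact g * riseN g m = fact (g + m)"
proof (induct m arbitrary: g)
  case 0 then show ?case by simp
next
  case (Suc m)
  have "fact g * riseN g (Suc m) = fact (Suc g) * riseN (Suc g) m" by (simp add: algebra_simps)
  also have "\<dots> = fact (Suc g + m)" by (rule Suc)
  finally show ?case by simp
qed

lemma riseN_0: "riseN 0 m = fact m"
  using fact_riseN[of 0 m] by simp

lemma lk_pd_pow: "lk ((pd k ^^ m) p) \<gamma> = of_nat (riseN (lk \<gamma> k) m) * lk p (\<gamma> + sgl k m)"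
proof (induct m arbitrary: \<gamma>)
  case 0 then show ?case by simp
next
  case (Suc m)
  have "lk ((pd k ^^ Suc m) p) \<gamma> = of_nat (lk \<gamma> k + 1) * lk ((pd k ^^ m) p) (\<gamma> + sgl k 1)"
    by (simp add: lk_pd)
  also have "\<dots> = of_nat (lk \<gamma> k + 1) * (of_nat (riseN (lk \<gamma> k + 1) m) * lk p (\<gamma> + sgl k 1 + sgl k m))"
    by (simp add: Suc lookup_add)
  also have "\<gamma> + sgl k 1 + sgl k m = \<gamma> + sgl k (Suc m)"
    by (simp add: add.assoc single_add[symmetric])
  also have "of_nat (lk \<gamma> k + 1) * (of_nat (riseN (lk \<gamma> k + 1) m) * lk p (\<gamma> + sgl k (Suc m)))
     = of_nat (riseN (lk \<gamma> k) (Suc m)) * lk p (\<gamma> + sgl k (Suc m))"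
    by (simp only: riseN.simps of_nat_mult mult.assoc)
  finally show ?case .
qed

definition riseP :: "('n \<Rightarrow>\<^sub>0 nat) \<Rightarrow> ('n \<Rightarrow>\<^sub>0 nat) \<Rightarrow> 'n set \<Rightarrow> nat" where
  "riseP \<gamma> \<beta> K = (\<Prod>k\<in>K. riseN (lk \<gamma> k) (lk \<beta> k))"

lemma lk_foldr_pd:
  assumes "distinct ks"
  shows "lk (foldr (\<lambda>k f. (pd k ^^ lk \<beta> k) \<circ> f) ks id p) \<gamma>
       = of_nat (riseP \<gamma> \<beta> (set ks)) * lk p (\<gamma> + (\<Sum>k\<in>set ks. sgl k (lk \<beta> k)))"
  using assms
proof (induct ks arbitrary: \<gamma>)
  case Nil then show ?case by (simp add: riseP_def)
next
  case (Cons k ks)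
  have eq: "riseP (\<gamma> + sgl k (lk \<beta> k)) \<beta> (set ks) = riseP \<gamma> \<beta> (set ks)"
    unfolding riseP_def using Cons.prems by (intro prod.cong) (auto simp: lookup_add lookup_single when_def)
  have "foldr (\<lambda>k f. (pd k ^^ lk \<beta> k) \<circ> f) (k#ks) id p = (pd k ^^ lk \<beta> k) (foldr (\<lambda>k f. (pd k ^^ lk \<beta> k) \<circ> f) ks id p)"
    by (simp only: foldr_Cons o_apply)
  then have "lk (foldr (\<lambda>k f. (pd k ^^ lk \<beta> k) \<circ> f) (k#ks) id p) \<gamma>
      = of_nat (riseN (lk \<gamma> k) (lk \<beta> k)) * lk (foldr (\<lambda>k f. (pd k ^^ lk \<beta> k) \<circ> f) ks id p) (\<gamma> + sgl k (lk \<beta> k))"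
    by (simp only: lk_pd_pow)
  also have "\<dots> = of_nat (riseN (lk \<gamma> k) (lk \<beta> k)) * (of_nat (riseP \<gamma> \<beta> (set ks)) * lk p (\<gamma> + sgl k (lk \<beta> k) + (\<Sum>k\<in>set ks. sgl k (lk \<beta> k))))"
  proof -
    have d: "distinct ks" using Cons.prems by simp
    show ?thesis using Cons.hyps[OF d, of "\<gamma> + sgl k (lk \<beta> k)"] unfolding eq by (simp only:)
  qed
  finally have X: "lk (foldr (\<lambda>k f. (pd k ^^ lk \<beta> k) \<circ> f) (k#ks) id p) \<gamma> = of_nat (riseN (lk \<gamma> k) (lk \<beta> k)) * (of_nat (riseP \<gamma> \<beta> (set ks)) * lk p (\<gamma> + sgl k (lk \<beta> k) + (\<Sum>k\<in>set ks. sgl k (lk \<beta> k))))" .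
  have r: "riseP \<gamma> \<beta> (set (k#ks)) = riseN (lk \<gamma> k) (lk \<beta> k) * riseP \<gamma> \<beta> (set ks)"
    using Cons.prems by (simp add: riseP_def)
  have sm: "(\<Sum>k\<in>set (k#ks). sgl k (lk \<beta> k)) = sgl k (lk \<beta> k) + (\<Sum>k\<in>set ks. sgl k (lk \<beta> k))"
    using Cons.prems by simp
  show ?case unfolding r sm using X by (simp only: of_nat_mult mult.assoc add.assoc)
qed

definition riseT :: "('n::finite \<Rightarrow>\<^sub>0 nat) \<Rightarrow> ('n \<Rightarrow>\<^sub>0 nat) \<Rightarrow> nat" where
  "riseT \<gamma> \<beta> = riseP \<gamma> \<beta> UNIV"

definition pfact :: "('n::finite \<Rightarrow>\<^sub>0 nat) \<Rightarrow> nat" where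
  "pfact \<alpha> = (\<Prod>k\<in>UNIV. fact (lk \<alpha> k))"

lemma pfact_riseT: "pfact \<gamma> * riseT \<gamma> \<beta> = pfact (\<gamma> + \<beta>)"
  by (simp add: pfact_def riseT_def riseP_def prod.distrib[symmetric] fact_riseN lookup_add)

lemma riseT_0: "riseT 0 \<beta> = pfact \<beta>"
  by (simp add: riseT_def riseP_def pfact_def riseN_0)

lemma pfact_pos: "pfact \<alpha> > 0"
  by (simp add: pfact_def)

lemma lk_dmono: "lk (dmono \<beta> p) \<gamma> = of_nat (riseT \<gamma> \<beta>) * lk p (\<gamma> + \<beta>)"
proof -
  have "lk (dmono \<beta> p) \<gamma> = of_nat (riseP \<gamma> \<beta> (set (sorted_list_of_set UNIV))) * lk p (\<gamma> + (\<Sum>k\<in>set (sorted_list_of_set UNIV). sgl k (lk \<beta> k)))"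
    unfolding dmono_def by (rule lk_foldr_pd) simp
  then show ?thesis by (simp add: riseT_def mono_sum_single[symmetric])
qed

lemma lk_dop: "lk (dop s p) \<gamma> = (\<Sum>\<beta>\<in>kz s. lk s \<beta> * (of_nat (riseT \<gamma> \<beta>) * lk p (\<gamma> + \<beta>)))"
  by (simp add: dop_def lookup_sum lk_pconst_mult lk_dmono)

lemma dop_sup: assumes "finite S" "kz s \<subseteq> S"
  shows "lk (dop s p) \<gamma> = (\<Sum>\<beta>\<in>S. lk s \<beta> * (of_nat (riseT \<gamma> \<beta>) * lk p (\<gamma> + \<beta>)))"
  unfolding lk_dop using assms by (intro sum.mono_neutral_left) (auto simp: in_keys_iff)

lemma dop_zero[simp]: "dop s 0 = 0"
  by (rule poly_mapping_eqI) (simp add: lk_dop)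

lemma dop_add: "dop s (p + q) = dop s p + dop s q"
  by (rule poly_mapping_eqI) (simp add: lk_dop lookup_add algebra_simps sum.distrib)

lemma dop_sum: "dop s (sum f S) = (\<Sum>x\<in>S. dop s (f x))"
  by (induct S rule: infinite_finite_induct) (auto simp: dop_add)

lemma dop_uminus: "dop s (- p) = - dop s p"
  by (rule poly_mapping_eqI) (simp add: lk_dop sum_negf)

lemma dop_neg1pow: "dop s ((-1)^n * p) = (-1)^n * dop s p"
  by (cases "even n") (simp_all add: dop_uminus)

section \<open>substitution is a ring homomorphism\<close>

definition pmon :: "('v \<Rightarrow> ('a::comm_ring_1, 'w) mpoly) \<Rightarrow> ('v::finite \<Rightarrow>\<^sub>0 nat) \<Rightarrow> ('a, 'w) mpoly" where
  "pmon \<sigma> \<alpha> = (\<Prod>k\<in>UNIV. \<sigma> k ^ lk \<alpha> k)"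

lemma pmon_add: "pmon \<sigma> (\<alpha> + \<beta>) = pmon \<sigma> \<alpha> * pmon \<sigma> \<beta>"
  by (simp add: pmon_def lookup_add power_add prod.distrib)

lemma pmon_0: "pmon \<sigma> 0 = 1" by (simp add: pmon_def)

lemma psubst_sup: assumes "finite S" "kz p \<subseteq> S"
  shows "psubst \<sigma> p = (\<Sum>\<alpha>\<in>S. pconst (lk p \<alpha>) * pmon \<sigma> \<alpha>)"
  unfolding psubst_def pmon_def using assms by (intro sum.mono_neutral_left) (auto simp: in_keys_iff)

lemma psubst_add: "psubst \<sigma> (p + q) = psubst \<sigma> p + psubst \<sigma> q"
proof -
  let ?S = "kz p \<union> kz q \<union> kz (p + q)"
  have "psubst \<sigma> (p + q) = (\<Sum>\<alpha>\<in>?S. pconst (lk (p+q) \<alpha>) * pmon \<sigma> \<alpha>)" by (rule psubst_sup) auto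
  also have "\<dots> = (\<Sum>\<alpha>\<in>?S. pconst (lk p \<alpha>) * pmon \<sigma> \<alpha>) + (\<Sum>\<alpha>\<in>?S. pconst (lk q \<alpha>) * pmon \<sigma> \<alpha>)"
    by (simp add: lookup_add pconst_add distrib_right sum.distrib)
  also have "\<dots> = psubst \<sigma> p + psubst \<sigma> q"
    by (subst (1 2) psubst_sup[of ?S]) auto
  finally show ?thesis .
qed

lemma psubst_0[simp]: "psubst \<sigma> 0 = 0" by (simp add: psubst_def)

lemma psubst_sum: "psubst \<sigma> (sum f S) = (\<Sum>x\<in>S. psubst \<sigma> (f x))"
  by (induct S rule: infinite_finite_induct) (auto simp: psubst_add)

lemma psubst_uminus: "psubst \<sigma> (- p) = - psubst \<sigma> p"
  using psubst_add[of \<sigma> p "-p"] by (simp add: add_eq_0_iff)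

lemma psubst_single: "psubst \<sigma> (sgl \<alpha> c) = pconst c * pmon \<sigma> \<alpha>"
  by (subst psubst_sup[of "{\<alpha>}"]) (auto simp: lookup_single)

lemma psubst_pconst: "psubst \<sigma> (pconst c) = pconst c"
  by (simp add: pconst_def psubst_single[unfolded pconst_def] pmon_0)

lemma psubst_1: "psubst \<sigma> 1 = 1"
  using psubst_pconst[of \<sigma> 1] by (simp add: pconst_1)

lemma poly_mult_sum: "p * q = (\<Sum>\<alpha>\<in>kz p. \<Sum>\<beta>\<in>kz q. sgl (\<alpha> + \<beta>) (lk p \<alpha> * lk q \<beta>))"
proof -
  have "p * q = (\<Sum>\<alpha>\<in>kz p. sgl \<alpha> (lk p \<alpha>)) * (\<Sum>\<beta>\<in>kz q. sgl \<beta> (lk q \<beta>))"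
    by (subst (1) poly_sum_single[of p], subst (1) poly_sum_single[of q]) (rule refl)
  then show ?thesis by (simp add: sum_product mult_single)
qed

lemma psubst_mult: "psubst \<sigma> (p * q) = psubst \<sigma> p * psubst \<sigma> q"
proof -
  have "psubst \<sigma> (p * q) = (\<Sum>\<alpha>\<in>kz p. \<Sum>\<beta>\<in>kz q. pconst (lk p \<alpha> * lk q \<beta>) * pmon \<sigma> (\<alpha> + \<beta>))"
    by (subst poly_mult_sum) (simp add: psubst_sum psubst_single)
  also have "\<dots> = (\<Sum>\<alpha>\<in>kz p. \<Sum>\<beta>\<in>kz q. (pconst (lk p \<alpha>) * pmon \<sigma> \<alpha>) * (pconst (lk q \<beta>) * pmon \<sigma> \<beta>))"
    by (simp add: pconst_mult pmon_add algebra_simps)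
  also have "\<dots> = psubst \<sigma> p * psubst \<sigma> q"
    by (simp add: psubst_def pmon_def sum_product)
  finally show ?thesis .
qed

lemma psubst_neg1pow: "psubst \<sigma> ((-1)^n * p) = (-1)^n * psubst \<sigma> p"
  by (cases "even n") (simp_all add: psubst_uminus)

section \<open>the diagonal pairing on polynomials\<close>

definition pp :: "('a::comm_ring_1, 'n::finite) mpoly \<Rightarrow> ('a, 'n) mpoly \<Rightarrow> 'a" where
  "pp f g = (\<Sum>\<alpha>\<in>kz f. lk f \<alpha> * lk g \<alpha> * of_nat (pfact \<alpha>))"

lemma pp_sup: assumes "finite S" "kz f \<inter> kz g \<subseteq> S"
  shows "pp f g = (\<Sum>\<alpha>\<in>S. lk f \<alpha> * lk g \<alpha> * of_nat (pfact \<alpha>))"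
proof -
  have "pp f g = (\<Sum>\<alpha>\<in>kz f \<inter> kz g. lk f \<alpha> * lk g \<alpha> * of_nat (pfact \<alpha>))"
    unfolding pp_def by (intro sum.mono_neutral_right) (auto simp: in_keys_iff)
  also have "\<dots> = (\<Sum>\<alpha>\<in>S. lk f \<alpha> * lk g \<alpha> * of_nat (pfact \<alpha>))"
    using assms by (intro sum.mono_neutral_left) (auto simp: in_keys_iff)
  finally show ?thesis .
qed

lemma pp_add1: "pp (f1 + f2) g = pp f1 g + pp f2 g"
proof -
  let ?S = "kz f1 \<union> kz f2 \<union> kz (f1 + f2)"
  show ?thesis
    by (subst (1 2 3) pp_sup[of ?S]) (auto simp: lookup_add algebra_simps sum.distrib)
qed

lemma pp_add2: "pp f (g1 + g2) = pp f g1 + pp f g2"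
proof -
  let ?S = "kz f"
  show ?thesis
    by (subst (1 2 3) pp_sup[of ?S]) (auto simp: lookup_add algebra_simps sum.distrib)
qed

lemma pp_zero1[simp]: "pp 0 g = 0" by (simp add: pp_def)
lemma pp_zero2[simp]: "pp f 0 = 0" by (simp add: pp_def)

lemma pp_sum1: "pp (sum f S) g = (\<Sum>x\<in>S. pp (f x) g)"
  by (induct S rule: infinite_finite_induct) (auto simp: pp_add1)

lemma pp_sum2: "pp f (sum g S) = (\<Sum>x\<in>S. pp f (g x))"
  by (induct S rule: infinite_finite_induct) (auto simp: pp_add2)

lemma lk_pconst_mult': "lk (p * pconst (c::'a::comm_ring_1)) \<alpha> = lk p \<alpha> * c"
  by (metis lk_pconst_mult mult.commute)

lemma pp_pconst1: "pp (pconst c * f) g = c * pp f g"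
proof -
  have "kz (pconst c * f) \<subseteq> kz f" by (auto simp: in_keys_iff lk_pconst_mult)
  then show ?thesis
    by (subst (1 2) pp_sup[of "kz f"]) (auto simp: lk_pconst_mult lk_pconst_mult' sum_distrib_left mult_ac)
qed

lemma pp_pconst2: "pp f (pconst c * g) = c * pp f g"
  by (subst (1 2) pp_sup[of "kz f"]) (auto simp: lk_pconst_mult lk_pconst_mult' sum_distrib_left mult_ac)

lemma pp_uminus1: "pp (- f) g = - pp f g"
  using pp_add1[of f "-f" g] by (simp add: add_eq_0_iff)

lemma pp_neg1pow1: "pp ((-1)^n * f) g = (-1)^n * pp f g"
  by (cases "even n") (simp_all add: pp_uminus1)

lemma pp_single2: "pp f (sgl \<delta> c) = lk f \<delta> * c * of_nat (pfact \<delta>)"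
  by (subst pp_sup[of "{\<delta>}"]) (auto simp: lookup_single)

lemma pp_dmono: "pp (dmono \<beta> f) g = pp f (sgl \<beta> 1 * g)"
proof -
  have "pp (dmono \<beta> f) g = (\<Sum>\<gamma>\<in>kz g. lk (dmono \<beta> f) \<gamma> * lk g \<gamma> * of_nat (pfact \<gamma>))"
    by (rule pp_sup) auto
  also have "\<dots> = (\<Sum>\<gamma>\<in>kz g. lk f (\<beta> + \<gamma>) * lk g \<gamma> * of_nat (pfact (\<beta> + \<gamma>)))"
  proof (rule sum.cong[OF refl])
    fix \<gamma>
    have "of_nat (pfact \<gamma>) * of_nat (riseT \<gamma> \<beta>) = (of_nat (pfact (\<beta> + \<gamma>)) :: 'a)"
      by (metis of_nat_mult pfact_riseT add.commute)
    then show "lk (dmono \<beta> f) \<gamma> * lk g \<gamma> * of_nat (pfact \<gamma>) = lk f (\<beta> + \<gamma>) * lk g \<gamma> * of_nat (pfact (\<beta> + \<gamma>))"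
      by (simp add: lk_dmono add.commute) (metis (no_types, lifting) mult.assoc mult.commute mult.left_commute)
  qed
  also have "\<dots> = pp f (\<Sum>\<gamma>\<in>kz g. sgl (\<beta> + \<gamma>) (lk g \<gamma>))"
    by (simp add: pp_sum2 pp_single2 algebra_simps)
  also have "(\<Sum>\<gamma>\<in>kz g. sgl (\<beta> + \<gamma>) (lk g \<gamma>)) = sgl \<beta> 1 * g"
    by (subst (2) poly_sum_single[of g]) (simp add: sum_distrib_left mult_single)
  finally show ?thesis .
qed

lemma pp_dop: "pp (dop s f) g = pp f (s * g)"
proof -
  have "pp (dop s f) g = (\<Sum>\<beta>\<in>kz s. lk s \<beta> * pp f (sgl \<beta> 1 * g))"
    by (simp add: dop_def pp_sum1 pp_pconst1 pp_dmono)
  also have "\<dots> = pp f (\<Sum>\<beta>\<in>kz s. pconst (lk s \<beta>) * (sgl \<beta> 1 * g))"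
    by (simp add: pp_sum2 pp_pconst2)
  also have "(\<Sum>\<beta>\<in>kz s. pconst (lk s \<beta>) * (sgl \<beta> 1 * g)) = s * g"
    by (subst (3) poly_sum_single[of s]) (simp add: sum_distrib_right pconst_def mult.assoc[symmetric] mult_single)
  finally show ?thesis .
qed

definition sgc :: "'m::linorder set \<Rightarrow> 'm \<Rightarrow> 'b::ring_1" where
  "sgc B a = (-1) ^ card {c\<in>B. c < a}"

lemma neg1_sq: "((-1::'b::ring_1)^n) * (-1)^n = 1"
  by (simp add: power_add[symmetric] flip: mult_2)

lemma iota_alt: "iota a \<omega> B = (if a \<notin> B then sgc B a * \<omega> (insert a B) else 0)"
  by (simp add: iota_def sgc_def)

lemma eps_alt: "eps a \<omega> B = (if a \<in> B then sgc B a * \<omega> (B - {a}) else 0)"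
  by (simp add: eps_def sgc_def)

lemma card_pairs_insert2:
  fixes X Y :: "'m::{finite,linorder} set"
  assumes "b \<notin> Y"
  shows "card {(a, c). a \<in> X \<and> c \<in> insert b Y \<and> c < a} = card {(a, c). a \<in> X \<and> c \<in> Y \<and> c < a} + card {x\<in>X. b < x}"
proof -
  have "{(a, c). a \<in> X \<and> c \<in> insert b Y \<and> c < a} = {(a, c). a \<in> X \<and> c \<in> Y \<and> c < a} \<union> (\<lambda>a. (a, b)) ` {x\<in>X. b < x}"
    by auto
  moreover have "{(a, c). a \<in> X \<and> c \<in> Y \<and> c < a} \<inter> (\<lambda>a. (a, b)) ` {x\<in>X. b < x} = {}"
    using assms by auto
  moreover have "card ((\<lambda>a. (a, b)) ` {x\<in>X. b < x}) = card {x\<in>X. b < x}"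
    by (rule card_image) (auto simp: inj_on_def)
  ultimately show ?thesis by (simp add: card_Un_disjoint)
qed

lemma card_pairs_insert1:
  fixes X Y :: "'m::{finite,linorder} set"
  assumes "b \<notin> X"
  shows "card {(a, c). a \<in> insert b X \<and> c \<in> Y \<and> c < a} = card {(a, c). a \<in> X \<and> c \<in> Y \<and> c < a} + card {y\<in>Y. y < b}"
proof -
  have "{(a, c). a \<in> insert b X \<and> c \<in> Y \<and> c < a} = {(a, c). a \<in> X \<and> c \<in> Y \<and> c < a} \<union> (\<lambda>c. (b, c)) ` {y\<in>Y. y < b}"
    by auto
  moreover have "{(a, c). a \<in> X \<and> c \<in> Y \<and> c < a} \<inter> (\<lambda>c. (b, c)) ` {y\<in>Y. y < b} = {}"
    using assms by auto
  moreover have "card ((\<lambda>c. (b, c)) ` {y\<in>Y. y < b}) = card {y\<in>Y. y < b}"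
    by (rule card_image) (auto simp: inj_on_def)
  ultimately show ?thesis by (simp add: card_Un_disjoint)
qed

lemma ssg_ins2: fixes X Y :: "'m::{finite,linorder} set"
  assumes "b \<notin> Y"
  shows "(shuffle_sign X (insert b Y) :: 'b::ring_1) = shuffle_sign X Y * (-1)^card {x\<in>X. b < x}"
  unfolding shuffle_sign_def using card_pairs_insert2[OF assms, of X] by (simp add: power_add)

lemma ssg_ins1: fixes X Y :: "'m::{finite,linorder} set"
  assumes "b \<notin> X"
  shows "(shuffle_sign (insert b X) Y :: 'b::ring_1) = shuffle_sign X Y * sgc Y b"
  unfolding shuffle_sign_def sgc_def using card_pairs_insert1[OF assms, of Y] by (simp add: power_add)

lemma sgc_split: fixes X :: "'m::{finite,linorder} set"
  assumes "b \<notin> X"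
  shows "(sgc X b :: 'b::ring_1) * (-1)^card {x\<in>X. b < x} = (-1)^card X"
proof -
  have "{x\<in>X. x < b} \<union> {x\<in>X. b < x} = X" using assms by auto (metis linorder_neqE)
  moreover have "{x\<in>X. x < b} \<inter> {x\<in>X. b < x} = {}" by auto
  ultimately have "card {x\<in>X. x < b} + card {x\<in>X. b < x} = card X"
    by (metis card_Un_disjoint finite)
  then show ?thesis by (simp add: sgc_def power_add[symmetric])
qed

lemma sgc_union: fixes X Y :: "'m::{finite,linorder} set"
  assumes "X \<inter> Y = {}"
  shows "(sgc (X \<union> Y) b :: 'b::ring_1) = sgc X b * sgc Y b"
proof -
  have "{c\<in>X \<union> Y. c < b} = {c\<in>X. c < b} \<union> {c\<in>Y. c < b}" by auto
  moreover have "{c\<in>X. c < b} \<inter> {c\<in>Y. c < b} = {}" using assms by auto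
  ultimately have "card {c\<in>X \<union> Y. c < b} = card {c\<in>X. c < b} + card {c\<in>Y. c < b}"
    by (simp add: card_Un_disjoint)
  then show ?thesis by (simp add: sgc_def power_add)
qed

lemma sgc_empty[simp]: "sgc {} b = 1" by (simp add: sgc_def)

lemma ssg_empty1[simp]: "shuffle_sign {} Y = 1" by (simp add: shuffle_sign_def)

lemma sum_Pow_insert:
  assumes "b \<notin> C0" "finite C0"
  shows "(\<Sum>A\<in>Pow (insert b C0). f A) = (\<Sum>X\<in>Pow C0. f X) + (\<Sum>X\<in>Pow C0. f (insert b X))"
proof -
  have inj: "inj_on (insert b) (Pow C0)" using assms(1)
    unfolding inj_on_def by (metis Pow_iff insert_ident subsetD)
  have "(\<Sum>A\<in>Pow (insert b C0). f A) = (\<Sum>X\<in>Pow C0. f X) + (\<Sum>A\<in>insert b ` Pow C0. f A)"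
    unfolding Pow_insert using assms by (intro sum.union_disjoint) auto
  also have "(\<Sum>A\<in>insert b ` Pow C0. f A) = (\<Sum>X\<in>Pow C0. f (insert b X))"
    by (rule sum.reindex[OF inj, unfolded o_def])
  finally show ?thesis .
qed

section \<open>contraction is an antiderivation\<close>

lemma iota_wedge:
  fixes c h :: "'m::{finite,linorder} set \<Rightarrow> 'b::comm_ring_1"
  shows "iota b (wedge c h) C = wedge (iota b c) h C + wedge (\<lambda>A. (-1)^card A * c A) (iota b h) C"
proof (cases "b \<in> C")
  case True
  define C0 where "C0 = C - {b}"
  have C: "C = insert b C0" "b \<notin> C0" using True by (auto simp: C0_def)
  have L: "iota b (wedge c h) C = 0" using True by (simp add: iota_alt)
  have R1: "wedge (iota b c) h C = (\<Sum>X\<in>Pow C0. shuffle_sign X (insert b (C0 - X)) * sgc X b * c (insert b X) * h (insert b (C0 - X)))"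
  proof -
    have "wedge (iota b c) h C = (\<Sum>X\<in>Pow C0. shuffle_sign X (C - X) * iota b c X * h (C - X)) + (\<Sum>X\<in>Pow C0. shuffle_sign (insert b X) (C - insert b X) * iota b c (insert b X) * h (C - insert b X))"
      unfolding wedge_def by (subst C(1), subst sum_Pow_insert) (use C in auto)
    also have "\<dots> = (\<Sum>X\<in>Pow C0. shuffle_sign X (insert b (C0 - X)) * sgc X b * c (insert b X) * h (insert b (C0 - X)))"
    proof -
      have "(\<Sum>X\<in>Pow C0. shuffle_sign (insert b X) (C - insert b X) * iota b c (insert b X) * h (C - insert b X)) = 0"
        by (simp add: iota_alt)
      moreover have "(\<Sum>X\<in>Pow C0. shuffle_sign X (C - X) * iota b c X * h (C - X)) = (\<Sum>X\<in>Pow C0. shuffle_sign X (insert b (C0 - X)) * sgc X b * c (insert b X) * h (insert b (C0 - X)))"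
      proof (rule sum.cong[OF refl])
        fix X assume "X \<in> Pow C0"
        then have "C - X = insert b (C0 - X)" "b \<notin> X" using C by auto
        then show "shuffle_sign X (C - X) * iota b c X * h (C - X) = shuffle_sign X (insert b (C0 - X)) * sgc X b * c (insert b X) * h (insert b (C0 - X))"
          by (simp add: iota_alt mult.assoc)
      qed
      ultimately show ?thesis by simp
    qed
    finally show ?thesis .
  qed
  have R2: "wedge (\<lambda>A. (-1)^card A * c A) (iota b h) C = (\<Sum>X\<in>Pow C0. shuffle_sign (insert b X) (C0 - X) * (-1)^(card X + 1) * c (insert b X) * (sgc (C0 - X) b * h (insert b (C0 - X))))"
  proof -
    have "wedge (\<lambda>A. (-1)^card A * c A) (iota b h) C = (\<Sum>X\<in>Pow C0. shuffle_sign X (C - X) * ((-1)^card X * c X) * iota b h (C - X)) + (\<Sum>X\<in>Pow C0. shuffle_sign (insert b X) (C - insert b X) * ((-1)^card (insert b X) * c (insert b X)) * iota b h (C - insert b X))"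
      unfolding wedge_def by (subst C(1), subst sum_Pow_insert) (use C in auto)
    also have "\<dots> = (\<Sum>X\<in>Pow C0. shuffle_sign (insert b X) (C0 - X) * (-1)^(card X + 1) * c (insert b X) * (sgc (C0 - X) b * h (insert b (C0 - X))))"
    proof -
      have "(\<Sum>X\<in>Pow C0. shuffle_sign X (C - X) * ((-1)^card X * c X) * iota b h (C - X)) = 0"
      proof (rule sum.neutral, rule ballI)
        fix X assume "X \<in> Pow C0"
        then have "b \<in> C - X" using C by auto
        then show "shuffle_sign X (C - X) * ((-1)^card X * c X) * iota b h (C - X) = 0" by (simp add: iota_alt)
      qed
      moreover have "(\<Sum>X\<in>Pow C0. shuffle_sign (insert b X) (C - insert b X) * ((-1)^card (insert b X) * c (insert b X)) * iota b h (C - insert b X))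
          = (\<Sum>X\<in>Pow C0. shuffle_sign (insert b X) (C0 - X) * (-1)^(card X + 1) * c (insert b X) * (sgc (C0 - X) b * h (insert b (C0 - X))))"
      proof (rule sum.cong[OF refl])
        fix X assume "X \<in> Pow C0"
        then have "C - insert b X = C0 - X" "b \<notin> X" "finite X" "b \<notin> C0 - X" using C by auto
        then show "shuffle_sign (insert b X) (C - insert b X) * ((-1)^card (insert b X) * c (insert b X)) * iota b h (C - insert b X) = shuffle_sign (insert b X) (C0 - X) * (-1)^(card X + 1) * c (insert b X) * (sgc (C0 - X) b * h (insert b (C0 - X)))"
          by (simp add: iota_alt mult.assoc)
      qed
      ultimately show ?thesis by simp
    qed
    finally show ?thesis .
  qed
  have "wedge (iota b c) h C + wedge (\<lambda>A. (-1)^card A * c A) (iota b h) C = 0"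
    unfolding R1 R2 sum.distrib[symmetric]
  proof (rule sum.neutral, rule ballI)
    fix X assume X: "X \<in> Pow C0"
    define Y where "Y = C0 - X"
    have bX: "b \<notin> X" "b \<notin> Y" using X C by (auto simp: Y_def)
    have e1: "(shuffle_sign X (insert b Y) :: 'b) * sgc X b = shuffle_sign X Y * (-1)^card X"
    proof -
      have "(shuffle_sign X (insert b Y) :: 'b) * sgc X b = shuffle_sign X Y * (sgc X b * (-1)^card {x\<in>X. b < x})"
        unfolding ssg_ins2[OF bX(2)] by (simp add: mult_ac)
      then show ?thesis by (simp only: sgc_split[OF bX(1)])
    qed
    have e2: "(shuffle_sign (insert b X) Y :: 'b) * (-1)^(card X + 1) * sgc Y b = - (shuffle_sign X Y * (-1)^card X)"
    proof -
      have "(shuffle_sign (insert b X) Y :: 'b) * (-1)^(card X + 1) * sgc Y b = shuffle_sign X Y * (sgc Y b * sgc Y b) * (-1)^(card X + 1)"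
        unfolding ssg_ins1[OF bX(1)] by (simp add: mult_ac)
      also have "sgc Y b * sgc Y b = (1::'b)" by (simp add: sgc_def neg1_sq)
      finally show ?thesis by simp
    qed
    have "shuffle_sign X (insert b Y) * sgc X b * c (insert b X) * h (insert b Y) + shuffle_sign (insert b X) Y * (-1)^(card X + 1) * c (insert b X) * (sgc Y b * h (insert b Y)) = (0::'b)"
    proof -
      have "shuffle_sign (insert b X) Y * (-1)^(card X + 1) * c (insert b X) * (sgc Y b * h (insert b Y))
         = (shuffle_sign (insert b X) Y * (-1)^(card X + 1) * sgc Y b) * c (insert b X) * h (insert b Y)"
        by (simp add: mult_ac)
      then show ?thesis by (simp only: e2 e1) simp
    qed
    then show "shuffle_sign X (insert b (C0 - X)) * sgc X b * c (insert b X) * h (insert b (C0 - X)) + shuffle_sign (insert b X) (C0 - X) * (-1)^(card X + 1) * c (insert b X) * (sgc (C0 - X) b * h (insert b (C0 - X))) = 0"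
      by (simp add: Y_def)
  qed
  then show ?thesis using L by simp
next
  case False
  have L: "iota b (wedge c h) C = sgc C b * ((\<Sum>X\<in>Pow C. shuffle_sign X (insert b (C - X)) * c X * h (insert b (C - X))) + (\<Sum>X\<in>Pow C. shuffle_sign (insert b X) (C - X) * c (insert b X) * h (C - X)))"
  proof -
    have eq: "\<And>X. X \<in> Pow C \<Longrightarrow> insert b C - X = insert b (C - X)" using False by auto
    have "iota b (wedge c h) C = sgc C b * ((\<Sum>X\<in>Pow C. shuffle_sign X (insert b C - X) * c X * h (insert b C - X)) + (\<Sum>X\<in>Pow C. shuffle_sign (insert b X) (C - X) * c (insert b X) * h (C - X)))"
      using False by (simp add: iota_alt wedge_def sum_Pow_insert)
    also have "(\<Sum>X\<in>Pow C. shuffle_sign X (insert b C - X) * c X * h (insert b C - X)) = (\<Sum>X\<in>Pow C. shuffle_sign X (insert b (C - X)) * c X * h (insert b (C - X)))"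
      by (rule sum.cong[OF refl]) (simp add: eq)
    finally show ?thesis .
  qed
  have R1: "wedge (iota b c) h C = (\<Sum>X\<in>Pow C. shuffle_sign X (C - X) * (sgc X b * c (insert b X)) * h (C - X))"
  proof -
    have "\<And>X. X \<in> Pow C \<Longrightarrow> b \<notin> X" using False by auto
    then show ?thesis unfolding wedge_def by (intro sum.cong refl) (simp add: iota_alt)
  qed
  have R2: "wedge (\<lambda>A. (-1)^card A * c A) (iota b h) C = (\<Sum>X\<in>Pow C. shuffle_sign X (C - X) * ((-1)^card X * c X) * (sgc (C - X) b * h (insert b (C - X))))"
  proof -
    have "\<And>X. X \<in> Pow C \<Longrightarrow> b \<notin> C - X" using False by auto
    then show ?thesis unfolding wedge_def by (intro sum.cong refl) (simp add: iota_alt)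
  qed
  have s1: "sgc C b * (\<Sum>X\<in>Pow C. shuffle_sign X (insert b (C - X)) * c X * h (insert b (C - X))) = wedge (\<lambda>A. (-1)^card A * c A) (iota b h) C"
    unfolding R2 sum_distrib_left
  proof (rule sum.cong[OF refl])
    fix X assume X: "X \<in> Pow C"
    define Y where "Y = C - X"
    have bX: "b \<notin> X" "b \<notin> Y" "X \<inter> Y = {}" "C = X \<union> Y" using X False by (auto simp: Y_def)
    have "(sgc C b :: 'b) * shuffle_sign X (insert b Y) = shuffle_sign X Y * (-1)^card X * sgc Y b"
    proof -
      have "(sgc C b :: 'b) * shuffle_sign X (insert b Y) = shuffle_sign X Y * (sgc X b * (-1)^card {x\<in>X. b < x}) * sgc Y b"
        unfolding ssg_ins2[OF bX(2)] bX(4) sgc_union[OF bX(3)] by (simp add: mult_ac)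
      then show ?thesis by (simp only: sgc_split[OF bX(1)])
    qed
    then show "sgc C b * (shuffle_sign X (insert b (C - X)) * c X * h (insert b (C - X))) = shuffle_sign X (C - X) * ((-1)^card X * c X) * (sgc (C - X) b * h (insert b (C - X)))"
      unfolding Y_def[symmetric] by (metis (no_types, lifting) mult.assoc mult.commute mult.left_commute)
  qed
  have s2: "sgc C b * (\<Sum>X\<in>Pow C. shuffle_sign (insert b X) (C - X) * c (insert b X) * h (C - X)) = wedge (iota b c) h C"
    unfolding R1 sum_distrib_left
  proof (rule sum.cong[OF refl])
    fix X assume X: "X \<in> Pow C"
    define Y where "Y = C - X"
    have bX: "b \<notin> X" "b \<notin> Y" "X \<inter> Y = {}" "C = X \<union> Y" using X False by (auto simp: Y_def)
    have "(sgc C b :: 'b) * shuffle_sign (insert b X) Y = shuffle_sign X Y * sgc X b"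
    proof -
      have "(sgc C b :: 'b) * shuffle_sign (insert b X) Y = shuffle_sign X Y * sgc X b * (sgc Y b * sgc Y b)"
        unfolding ssg_ins1[OF bX(1)] bX(4) sgc_union[OF bX(3)] by (simp add: mult_ac)
      also have "sgc Y b * sgc Y b = (1::'b)" by (simp add: sgc_def neg1_sq)
      finally show ?thesis by simp
    qed
    then show "sgc C b * (shuffle_sign (insert b X) (C - X) * c (insert b X) * h (C - X)) = shuffle_sign X (C - X) * (sgc X b * c (insert b X)) * h (C - X)"
      unfolding Y_def[symmetric] by (metis (no_types, lifting) mult.assoc mult.commute mult.left_commute)
  qed
  show ?thesis unfolding L distrib_left s1 s2 by simp
qed

lemma wedge_unit: "wedge (\<lambda>A. k * ext_one A) W C = k * (W C :: 'b::comm_ring_1)"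
proof -
  have "wedge (\<lambda>A. k * ext_one A) W C = (\<Sum>A\<in>Pow C. if A = {} then k * W C else 0)"
    unfolding wedge_def by (intro sum.cong refl) (simp add: ext_one_def)
  also have "\<dots> = k * W C" by (simp add: sum.delta')
  finally show ?thesis .
qed

lemma iota_ext_vec:
  fixes u :: "'m::{finite,linorder} \<Rightarrow> 'b::comm_ring_1"
  shows "iota b (ext_vec u) = (\<lambda>A. u b * ext_one A)"
proof
  fix A :: "'m set"
  show "iota b (ext_vec u) A = u b * ext_one A"
  proof (cases "b \<in> A")
    case True then show ?thesis by (auto simp: iota_alt ext_one_def)
  next
    case False
    have "card (insert b A) = Suc (card A)" using False by simp
    then have "card (insert b A) = 1 \<longleftrightarrow> A = {}" by simp
    then show ?thesis using False by (auto simp: iota_alt ext_one_def ext_vec_def)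
  qed
qed

lemma negcard_ext_vec: "(\<lambda>A. (-1)^card A * ext_vec u A) = (\<lambda>A. - (ext_vec u A :: 'b::comm_ring_1))"
  by (auto simp: ext_vec_def fun_eq_iff)

lemma wedge_neg1: "wedge (\<lambda>A. - u A) w C = - (wedge u w C :: 'b::comm_ring_1)"
  by (simp add: wedge_def sum_negf)

lemma wedge_lin2: "wedge u (\<lambda>C. \<Sum>i\<in>I. k i * W i C) C = (\<Sum>i\<in>I. k i * (wedge u (W i) C :: 'b::comm_ring_1))"
  unfolding wedge_def by (simp add: sum_distrib_left sum_distrib_right mult_ac) (rule sum.swap)

lemma wedge_lin1: "wedge (\<lambda>A. \<Sum>i\<in>I. k i * U i A) w C = (\<Sum>i\<in>I. k i * (wedge (U i) w C :: 'b::comm_ring_1))"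
  unfolding wedge_def by (simp add: sum_distrib_left sum_distrib_right mult_ac) (rule sum.swap)

lemma iota_wedge_vec: "iota b (wedge (ext_vec u) W) C = u b * W C - (wedge (ext_vec u) (iota b W) C :: 'b::comm_ring_1)"
  unfolding iota_wedge iota_ext_vec negcard_ext_vec wedge_unit wedge_neg1 by simp

lemma sgc_insert_less: fixes S :: "'m::{finite,linorder} set"
  assumes "x \<notin> S" "x < a"
  shows "(sgc (insert x S) a :: 'b::ring_1) = - sgc S a"
proof -
  have "{c\<in>insert x S. c < a} = insert x {c\<in>S. c < a}" using assms by auto
  then have "card {c\<in>insert x S. c < a} = Suc (card {c\<in>S. c < a})" using assms by simp
  then show ?thesis by (simp add: sgc_def)
qed

definition Ex :: "('a::comm_ring_1, 'm::{finite,linorder}) sqmat \<Rightarrow> 'm list \<Rightarrow> 'm set \<Rightarrow> 'a" where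
  "Ex R xs = foldr (\<lambda>a acc. wedge (ext_vec (\<lambda>b. R $ b $ a)) acc) xs ext_one"

lemma Ex_Cons: "Ex R (x # xs) = wedge (ext_vec (\<lambda>b. R $ b $ x)) (Ex R xs)"
  by (simp add: Ex_def)

lemma K_list:
  assumes "sorted_wrt (<) xs"
  shows "iota b (Ex R xs) C = (\<Sum>a\<in>set xs. R $ b $ a * sgc (set xs - {a}) a * Ex R (remove1 a xs) C)"
  using assms
proof (induct xs arbitrary: C)
  case Nil
  show ?case by (simp add: Ex_def iota_alt ext_one_def)
next
  case (Cons x xs)
  have xs: "sorted_wrt (<) xs" and lt: "\<forall>y\<in>set xs. x < y" using Cons.prems by auto
  then have xn: "x \<notin> set xs" by auto
  have IH: "iota b (Ex R xs) = (\<lambda>C. \<Sum>a\<in>set xs. (R $ b $ a * sgc (set xs - {a}) a) * Ex R (remove1 a xs) C)"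
    using Cons.hyps[OF xs] by (auto simp: fun_eq_iff mult.assoc)
  have "iota b (Ex R (x # xs)) C = R $ b $ x * Ex R xs C - wedge (ext_vec (\<lambda>b. R $ b $ x)) (iota b (Ex R xs)) C"
    unfolding Ex_Cons by (rule iota_wedge_vec)
  also have "wedge (ext_vec (\<lambda>b. R $ b $ x)) (iota b (Ex R xs)) C = (\<Sum>a\<in>set xs. (R $ b $ a * sgc (set xs - {a}) a) * Ex R (x # remove1 a xs) C)"
    unfolding IH wedge_lin2 Ex_Cons by simp
  finally have L: "iota b (Ex R (x # xs)) C = R $ b $ x * Ex R xs C - (\<Sum>a\<in>set xs. (R $ b $ a * sgc (set xs - {a}) a) * Ex R (x # remove1 a xs) C)" .
  have e0: "{c \<in> set xs. c < x} = {}" using lt by auto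
  have s1: "sgc (set xs) x = 1" unfolding sgc_def e0 by simp
  have "(\<Sum>a\<in>set (x # xs). R $ b $ a * sgc (set (x # xs) - {a}) a * Ex R (remove1 a (x # xs)) C)
      = R $ b $ x * sgc (set xs) x * Ex R xs C + (\<Sum>a\<in>set xs. R $ b $ a * sgc (insert x (set xs - {a})) a * Ex R (x # remove1 a xs) C)"
  proof -
    have "(\<Sum>a\<in>set xs. R $ b $ a * sgc (set (x # xs) - {a}) a * Ex R (remove1 a (x # xs)) C) = (\<Sum>a\<in>set xs. R $ b $ a * sgc (insert x (set xs - {a})) a * Ex R (x # remove1 a xs) C)"
    proof (rule sum.cong[OF refl])
      fix a assume "a \<in> set xs"
      then have "a \<noteq> x" using xn by auto
      then have "set (x # xs) - {a} = insert x (set xs - {a})" "remove1 a (x # xs) = x # remove1 a xs" by auto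
      then show "R $ b $ a * sgc (set (x # xs) - {a}) a * Ex R (remove1 a (x # xs)) C = R $ b $ a * sgc (insert x (set xs - {a})) a * Ex R (x # remove1 a xs) C" by simp
    qed
    moreover have "set (x # xs) - {x} = set xs" using xn by auto
    ultimately show ?thesis using xn by simp
  qed
  also have "(\<Sum>a\<in>set xs. R $ b $ a * sgc (insert x (set xs - {a})) a * Ex R (x # remove1 a xs) C) = - (\<Sum>a\<in>set xs. (R $ b $ a * sgc (set xs - {a}) a) * Ex R (x # remove1 a xs) C)"
    unfolding sum_negf[symmetric]
  proof (rule sum.cong[OF refl])
    fix a assume a: "a \<in> set xs"
    have "R $ b $ a * sgc (insert x (set xs - {a})) a = - (R $ b $ a * sgc (set xs - {a}) a)"
      using a lt xn by (subst sgc_insert_less) auto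
    then show "R $ b $ a * sgc (insert x (set xs - {a})) a * Ex R (x # remove1 a xs) C = - (R $ b $ a * sgc (set xs - {a}) a * Ex R (x # remove1 a xs) C)" by simp
  qed
  finally show ?case unfolding L s1 by simp
qed

lemma ext_act_Ex: "ext_act R A = Ex R (sorted_list_of_set A)"
  by (simp add: ext_act_def Ex_def)

lemma K_set:
  fixes R :: "('a::comm_ring_1, 'm::{finite,linorder}) sqmat"
  shows "iota b (ext_act R A) C = (\<Sum>a\<in>A. R $ b $ a * sgc (A - {a}) a * ext_act R (A - {a}) C)"
proof -
  have "iota b (ext_act R A) C = (\<Sum>a\<in>set (sorted_list_of_set A). R $ b $ a * sgc (set (sorted_list_of_set A) - {a}) a * Ex R (remove1 a (sorted_list_of_set A)) C)"
    unfolding ext_act_Ex by (rule K_list) simp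
  then show ?thesis by (simp add: ext_act_Ex sorted_list_of_set_remove)
qed

section \<open>counting fibre-preserving permutations\<close>

definition Pf :: "'x set \<Rightarrow> ('x \<Rightarrow> 'y) \<Rightarrow> ('x \<Rightarrow> 'x) set" where
  "Pf S f = {\<sigma>. \<sigma> permutes S \<and> (\<forall>x\<in>S. f (\<sigma> x) = f x)}"

lemma restrict_perm:
  assumes "\<sigma> permutes S" "finite S" "F \<subseteq> S" "\<sigma> ` F \<subseteq> F"
  shows "(\<lambda>x. if x \<in> F then \<sigma> x else x) permutes F"
proof (rule bij_imp_permutes)
  have inj: "inj_on \<sigma> F" using assms(1) permutes_inj_on by blast
  have fin: "finite F" using assms(2,3) finite_subset by blast
  have "\<sigma> ` F = F" using endo_inj_surj[OF fin assms(4) inj] .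
  then show "bij_betw (\<lambda>x. if x \<in> F then \<sigma> x else x) F F"
    using inj unfolding bij_betw_def inj_on_def by (auto simp: image_def)
qed auto

lemma card_Pf:
  fixes f :: "'x \<Rightarrow> 'y" and S :: "'x set"
  assumes "finite V" "finite S" "f ` S \<subseteq> V"
  shows "card (Pf S f) = (\<Prod>b\<in>V. fact (card {x\<in>S. f x = b}))"
  using assms
proof (induct V arbitrary: S rule: finite_induct)
  case empty
  then have "S = {}" by auto
  then have "Pf S f = {id}" by (auto simp: Pf_def permutes_empty)
  then show ?case by simp
next
  case (insert v V S)
  define F where "F = {x\<in>S. f x = v}"
  define S' where "S' = S - F"
  have FS: "F \<subseteq> S" "S' \<subseteq> S" "F \<inter> S' = {}" "S = F \<union> S'" by (auto simp: F_def S'_def)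
  have finF: "finite F" "finite S'" using insert.prems by (auto simp: F_def S'_def)
  have fS': "f ` S' \<subseteq> V" using insert.prems by (auto simp: F_def S'_def)
  have IH: "card (Pf S' f) = (\<Prod>b\<in>V. fact (card {x\<in>S'. f x = b}))"
    using insert.hyps(3)[OF finF(2) fS'] .
  define \<Phi> where "\<Phi> = (\<lambda>(\<tau>::'x \<Rightarrow> 'x, \<sigma>::'x \<Rightarrow> 'x). \<tau> \<circ> \<sigma>)"
  have bij: "bij_betw \<Phi> ({\<tau>. \<tau> permutes F} \<times> Pf S' f) (Pf S f)"
  proof (rule bij_betwI')
    fix p q assume p: "p \<in> {\<tau>. \<tau> permutes F} \<times> Pf S' f" and q: "q \<in> {\<tau>. \<tau> permutes F} \<times> Pf S' f"
    obtain \<tau>1 \<sigma>1 where p1: "p = (\<tau>1, \<sigma>1)" by (cases p)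
    obtain \<tau>2 \<sigma>2 where q1: "q = (\<tau>2, \<sigma>2)" by (cases q)
    have p': "p = (\<tau>1, \<sigma>1)" "\<tau>1 permutes F" "\<sigma>1 permutes S'" using p p1 by (simp_all add: Pf_def)
    have q': "q = (\<tau>2, \<sigma>2)" "\<tau>2 permutes F" "\<sigma>2 permutes S'" using q q1 by (simp_all add: Pf_def)
    have e1: "\<And>x \<tau> \<sigma>. \<tau> permutes F \<Longrightarrow> \<sigma> permutes S' \<Longrightarrow> x \<in> F \<Longrightarrow> (\<tau> \<circ> \<sigma>) x = \<tau> x"
    proof -
      fix x \<tau> \<sigma> assume a: "\<tau> permutes F" "\<sigma> permutes S'" "x \<in> F"
      then have "x \<notin> S'" using FS(3) by auto
      then show "(\<tau> \<circ> \<sigma>) x = \<tau> x" by (simp add: permutes_not_in[OF a(2)])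
    qed
    have e2: "\<And>x \<tau> \<sigma>. \<tau> permutes F \<Longrightarrow> \<sigma> permutes S' \<Longrightarrow> x \<notin> F \<Longrightarrow> (\<tau> \<circ> \<sigma>) x = \<sigma> x"
    proof -
      fix x \<tau> \<sigma> assume a: "\<tau> permutes F" "\<sigma> permutes S'" "x \<notin> F"
      show "(\<tau> \<circ> \<sigma>) x = \<sigma> x"
      proof (cases "x \<in> S'")
        case True then have "\<sigma> x \<in> S'" using permutes_in_image[OF a(2)] by simp
        then have "\<sigma> x \<notin> F" using FS(3) by auto
        then show ?thesis by (simp add: permutes_not_in[OF a(1)])
      next
        case False then show ?thesis by (simp add: permutes_not_in[OF a(1) a(3)] permutes_not_in[OF a(2) False])
      qed
    qed
    show "(\<Phi> p = \<Phi> q) = (p = q)"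
    proof
      assume eq: "\<Phi> p = \<Phi> q"
      have "\<tau>1 = \<tau>2"
      proof
        fix x show "\<tau>1 x = \<tau>2 x"
        proof (cases "x \<in> F")
          case True
          have "\<Phi> p x = \<tau>1 x" using e1[OF p'(2,3) True] p'(1) by (simp add: \<Phi>_def)
          moreover have "\<Phi> q x = \<tau>2 x" using e1[OF q'(2,3) True] q'(1) by (simp add: \<Phi>_def)
          ultimately show ?thesis using eq by simp
        next
          case False
          then show ?thesis by (simp add: permutes_not_in[OF p'(2) False] permutes_not_in[OF q'(2) False])
        qed
      qed
      moreover have "\<sigma>1 = \<sigma>2"
      proof
        fix x show "\<sigma>1 x = \<sigma>2 x"
        proof (cases "x \<in> F")
          case True then have "x \<notin> S'" using FS(3) by auto
          then show ?thesis by (simp add: permutes_not_in[OF p'(3)] permutes_not_in[OF q'(3)])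
        next
          case False then show ?thesis
            using fun_cong[OF eq, of x] e2[OF p'(2,3) False] e2[OF q'(2,3) False] p'(1) q'(1)
            by (simp add: \<Phi>_def)
        qed
      qed
      ultimately show "p = q" using p'(1) q'(1) by simp
    qed simp
  next
    fix p assume p: "p \<in> {\<tau>. \<tau> permutes F} \<times> Pf S' f"
    obtain \<tau> \<sigma> where p': "p = (\<tau>, \<sigma>)" "\<tau> permutes F" "\<sigma> permutes S'" "\<forall>x\<in>S'. f (\<sigma> x) = f x"
    proof -
      obtain \<tau> \<sigma> where p1: "p = (\<tau>, \<sigma>)" by (cases p)
      then show ?thesis using that p by (simp add: Pf_def)
    qed
    have perm: "\<tau> \<circ> \<sigma> permutes S"
      by (rule permutes_compose[OF permutes_subset[OF p'(3) FS(2)] permutes_subset[OF p'(2) FS(1)]])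
    have "\<forall>x\<in>S. f ((\<tau> \<circ> \<sigma>) x) = f x"
    proof
      fix x assume x: "x \<in> S"
      show "f ((\<tau> \<circ> \<sigma>) x) = f x"
      proof (cases "x \<in> F")
        case True
        then have "x \<notin> S'" using FS(3) by auto
        then have "\<sigma> x = x" by (simp add: permutes_not_in[OF p'(3)])
        moreover have "\<tau> x \<in> F" using True permutes_in_image[OF p'(2)] by simp
        ultimately show ?thesis using True by (simp add: F_def)
      next
        case False
        then have xS': "x \<in> S'" using x by (simp add: S'_def)
        then have "\<sigma> x \<in> S'" using permutes_in_image[OF p'(3)] by simp
        then have "\<sigma> x \<notin> F" using FS(3) by auto
        then have "\<tau> (\<sigma> x) = \<sigma> x" by (simp add: permutes_not_in[OF p'(2)])
        then show ?thesis using p'(4) xS' by simp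
      qed
    qed
    then show "\<Phi> p \<in> Pf S f" using perm p'(1) by (simp add: Pf_def \<Phi>_def)
  next
    fix \<sigma> assume s: "\<sigma> \<in> Pf S f"
    then have sp: "\<sigma> permutes S" and sf: "\<forall>x\<in>S. f (\<sigma> x) = f x" by (auto simp: Pf_def)
    have imF: "\<sigma> ` F \<subseteq> F" using sp sf by (auto simp: F_def permutes_in_image)
    have imS': "\<sigma> ` S' \<subseteq> S'"
    proof
      fix y assume "y \<in> \<sigma> ` S'"
      then obtain x where x: "x \<in> S'" "y = \<sigma> x" by auto
      then show "y \<in> S'" using sp sf by (auto simp: S'_def F_def permutes_in_image)
    qed
    define \<tau> where "\<tau> = (\<lambda>x. if x \<in> F then \<sigma> x else x)"
    define \<sigma>' where "\<sigma>' = (\<lambda>x. if x \<in> S' then \<sigma> x else x)"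
    have t: "\<tau> permutes F" unfolding \<tau>_def by (rule restrict_perm[OF sp insert.prems(1) FS(1) imF])
    have s': "\<sigma>' permutes S'" unfolding \<sigma>'_def by (rule restrict_perm[OF sp insert.prems(1) FS(2) imS'])
    have s'f: "\<forall>x\<in>S'. f (\<sigma>' x) = f x" using sf FS by (auto simp: \<sigma>'_def)
    have "\<tau> \<circ> \<sigma>' = \<sigma>"
    proof
      fix x show "(\<tau> \<circ> \<sigma>') x = \<sigma> x"
      proof (cases "x \<in> S'")
        case True
        then have "\<sigma> x \<in> S'" using imS' by auto
        then show ?thesis using True FS(3) by (auto simp: \<tau>_def \<sigma>'_def)
      next
        case False
        show ?thesis
        proof (cases "x \<in> F")
          case True then show ?thesis using False by (auto simp: \<tau>_def \<sigma>'_def)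
        next
          case F: False
          then have "x \<notin> S" using False FS(4) by auto
          then show ?thesis using False F by (simp add: \<tau>_def \<sigma>'_def permutes_not_in[OF sp])
        qed
      qed
    qed
    then show "\<exists>p\<in>{\<tau>. \<tau> permutes F} \<times> Pf S' f. \<sigma> = \<Phi> p"
      using t s' s'f by (intro bexI[of _ "(\<tau>, \<sigma>')"]) (auto simp: \<Phi>_def Pf_def)
  qed
  have "card (Pf S f) = card ({\<tau>. \<tau> permutes F} \<times> Pf S' f)"
    using bij_betw_same_card[OF bij] by simp
  also have "\<dots> = fact (card F) * card (Pf S' f)"
    by (simp add: card_cartesian_product card_permutations[OF refl finF(1)])
  finally have c1: "card (Pf S f) = fact (card F) * card (Pf S' f)" .
  have c2: "(\<Prod>b\<in>V. fact (card {x\<in>S'. f x = b})) = (\<Prod>b\<in>V. fact (card {x\<in>S. f x = b}))"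
  proof (rule prod.cong[OF refl])
    fix b assume "b \<in> V"
    then have "b \<noteq> v" using insert.hyps(2) by auto
    then have "{x\<in>S'. f x = b} = {x\<in>S. f x = b}" by (auto simp: S'_def F_def)
    then show "fact (card {x\<in>S'. f x = b}) = fact (card {x\<in>S. f x = b})" by simp
  qed
  show ?case using insert.hyps(1,2) IH c1 c2 by (simp add: F_def)
qed

definition cnt :: "'x list \<Rightarrow> 'x \<Rightarrow> nat" where
  "cnt xs k = card {i. i < length xs \<and> xs ! i = k}"

lemma cnt_filter: "cnt xs k = length (filter ((=) k) xs)"
  by (simp add: cnt_def length_filter_conv_card eq_commute)

lemma cnt_mono_list: "cnt (mono_list \<alpha>) k = lk \<alpha> (k::'n::{finite,linorder})"
proof -
  have "cnt (mono_list \<alpha>) k = sum_list (map (\<lambda>j. length (filter ((=) k) (replicate (lk \<alpha> j) j))) (sorted_list_of_set (UNIV::'n set)))"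
    by (simp add: cnt_filter mono_list_def filter_concat length_concat o_def)
  also have "\<dots> = (\<Sum>j\<in>UNIV. length (filter ((=) k) (replicate (lk \<alpha> j) j)))"
    by (simp add: sum_list_distinct_conv_sum_set)
  also have "\<dots> = (\<Sum>j\<in>UNIV. if j = k then lk \<alpha> j else 0)"
    by (intro sum.cong refl) auto
  also have "\<dots> = lk \<alpha> k" by simp
  finally show ?thesis .
qed

lemma prod_of_bool: "finite I \<Longrightarrow> (\<Prod>i\<in>I. (of_bool (P i) :: 'a::comm_semiring_1)) = of_bool (\<forall>i\<in>I. P i)"
  by (induct I rule: finite_induct) auto

lemma cnt_perm:
  assumes "\<sigma> permutes {..<length ys}" "length xs = length ys" "\<forall>i<length xs. xs ! i = ys ! (\<sigma> i)"
  shows "cnt xs k = cnt ys k"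
proof -
  have "\<sigma> ` {i. i < length xs \<and> xs ! i = k} = {j. j < length ys \<and> ys ! j = k}"
  proof
    show "\<sigma> ` {i. i < length xs \<and> xs ! i = k} \<subseteq> {j. j < length ys \<and> ys ! j = k}"
    proof
      fix y assume "y \<in> \<sigma> ` {i. i < length xs \<and> xs ! i = k}"
      then obtain i where "i \<in> {i. i < length xs \<and> xs ! i = k}" and i3: "y = \<sigma> i" by (rule imageE)
      then have i: "i < length xs" "xs ! i = k" "y = \<sigma> i" by auto
      have "\<sigma> i < length ys" using permutes_in_image[OF assms(1), of i] i(1) assms(2) by simp
      moreover have "ys ! (\<sigma> i) = k" using assms(3) i(1,2) by simp
      ultimately show "y \<in> {j. j < length ys \<and> ys ! j = k}" using i(3) by simp
    qed
    show "{j. j < length ys \<and> ys ! j = k} \<subseteq> \<sigma> ` {i. i < length xs \<and> xs ! i = k}"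
    proof
      fix j assume j: "j \<in> {j. j < length ys \<and> ys ! j = k}"
      have "j \<in> \<sigma> ` {..<length ys}" using j permutes_image[OF assms(1)] by simp
      then obtain i where i1: "i \<in> {..<length ys}" and i2: "j = \<sigma> i" by (rule imageE)
      have il: "i < length xs" using i1 assms(2) by simp
      have "xs ! i = ys ! (\<sigma> i)" using assms(3) il by simp
      then have "xs ! i = k" using j i2 by simp
      then have "i \<in> {i. i < length xs \<and> xs ! i = k}" using il by simp
      then show "j \<in> \<sigma> ` {i. i < length xs \<and> xs ! i = k}" using i2 by (rule rev_image_eqI)
    qed
  qed
  moreover have "inj_on \<sigma> {i. i < length xs \<and> xs ! i = k}" using permutes_inj_on[OF assms(1)] .
  ultimately show ?thesis unfolding cnt_def using card_image by metis
qed

lemma sym_pair_eq: "(sym_pair \<alpha> \<beta> :: 'a::comm_ring_1) = (if \<alpha> = \<beta> then of_nat (pfact \<alpha>) else 0)"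
proof -
  define xs where "xs = mono_list \<alpha>"
  define ys where "ys = mono_list \<beta>"
  define n where "n = length xs"
  have fin: "finite {\<sigma>. \<sigma> permutes {..<n}}" by (rule finite_permutations) simp
  have sp: "(sym_pair \<alpha> \<beta> :: 'a) = (if length xs = length ys then of_nat (card ({\<sigma>. \<sigma> permutes {..<n}} \<inter> {\<sigma>. \<forall>i\<in>{..<n}. xs ! i = ys ! (\<sigma> i)})) else 0)"
  proof -
    have "(sym_pair \<alpha> \<beta> :: 'a) = (if length xs = length ys then (\<Sum>\<sigma>\<in>{\<sigma>. \<sigma> permutes {..<n}}. of_bool (\<forall>i\<in>{..<n}. xs ! i = ys ! (\<sigma> i))) else 0)"
      unfolding sym_pair_def Let_def xs_def[symmetric] ys_def[symmetric] n_def[symmetric] lessThan_def[symmetric]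
      by (simp only: prod_of_bool[OF finite_lessThan])
    also have "(\<Sum>\<sigma>\<in>{\<sigma>. \<sigma> permutes {..<n}}. (of_bool (\<forall>i\<in>{..<n}. xs ! i = ys ! (\<sigma> i)) :: 'a)) = of_nat (card ({\<sigma>. \<sigma> permutes {..<n}} \<inter> {\<sigma>. \<forall>i\<in>{..<n}. xs ! i = ys ! (\<sigma> i)}))"
      using fin by simp
    finally show ?thesis .
  qed
  show ?thesis
  proof (cases "\<alpha> = \<beta>")
    case True
    then have ys: "ys = xs" by (simp add: xs_def ys_def)
    have "{\<sigma>. \<sigma> permutes {..<n}} \<inter> {\<sigma>. \<forall>i\<in>{..<n}. xs ! i = ys ! (\<sigma> i)} = Pf {..<n} (\<lambda>i. xs ! i)"
      unfolding ys Pf_def by auto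
    moreover have "card (Pf {..<n} (\<lambda>i. xs ! i)) = (\<Prod>b\<in>UNIV. fact (card {i\<in>{..<n}. xs ! i = b}))"
      by (rule card_Pf) auto
    moreover have "\<And>b. card {i\<in>{..<n}. xs ! i = b} = lk \<alpha> b"
      using cnt_mono_list[of \<alpha>] unfolding cnt_def xs_def n_def by simp
    ultimately show ?thesis using True sp ys by (simp add: pfact_def)
  next
    case False
    have "{\<sigma>. \<sigma> permutes {..<n}} \<inter> {\<sigma>. \<forall>i\<in>{..<n}. xs ! i = ys ! (\<sigma> i)} = {}" if len: "length xs = length ys"
    proof (rule ccontr)
      assume "\<not> ?thesis"
      then obtain \<sigma> where s: "\<sigma> permutes {..<length ys}" "\<forall>i<length xs. xs ! i = ys ! (\<sigma> i)"
        using len by (auto simp: n_def)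
      have "\<forall>k. lk \<alpha> k = lk \<beta> k"
        using cnt_perm[OF s(1) len s(2)] cnt_mono_list unfolding xs_def ys_def by metis
      then have "\<alpha> = \<beta>" by (simp add: poly_mapping_eqI)
      then show False using False by simp
    qed
    then show ?thesis using sp False by auto
  qed
qed

lemma ext_pair_eq: "(ext_pair A B :: 'a::comm_ring_1) = (if A = B then 1 else 0)"
proof -
  define as where "as = sorted_list_of_set A"
  define bs where "bs = sorted_list_of_set B"
  define n where "n = length as"
  have fin: "finite {\<sigma>. \<sigma> permutes {..<n}}" by (rule finite_permutations) simp
  have dA: "distinct as" "set as = A" "length as = card A" by (simp_all add: as_def)
  have dB: "distinct bs" "set bs = B" "length bs = card B" by (simp_all add: bs_def)
  have ep: "(ext_pair A B :: 'a) = (if length as = length bs then (\<Sum>\<sigma>\<in>{\<sigma>. \<sigma> permutes {..<n}}. of_int (sign \<sigma>) * of_bool (\<forall>i\<in>{..<n}. as ! i = bs ! (\<sigma> i))) else 0)"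
    unfolding ext_pair_def Let_def as_def[symmetric] bs_def[symmetric] n_def[symmetric]
    by (simp add: prod_of_bool)
  show ?thesis
  proof (cases "A = B")
    case True
    then have bs: "bs = as" by (simp add: as_def bs_def)
    have "(\<Sum>\<sigma>\<in>{\<sigma>. \<sigma> permutes {..<n}}. of_int (sign \<sigma>) * of_bool (\<forall>i\<in>{..<n}. as ! i = bs ! (\<sigma> i)))
        = (\<Sum>\<sigma>\<in>{\<sigma>. \<sigma> permutes {..<n}}. if \<sigma> = id then (1::'a) else 0)"
    proof (rule sum.cong[OF refl])
      fix \<sigma> assume s: "\<sigma> \<in> {\<sigma>. \<sigma> permutes {..<n}}"
      have "(\<forall>i\<in>{..<n}. as ! i = as ! (\<sigma> i)) \<longleftrightarrow> \<sigma> = id"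
      proof
        assume h: "\<forall>i\<in>{..<n}. as ! i = as ! (\<sigma> i)"
        show "\<sigma> = id"
        proof
          fix i show "\<sigma> i = id i"
          proof (cases "i < n")
            case True
            then have "\<sigma> i < n" using permutes_in_image[of \<sigma> "{..<n}" i] s by simp
            moreover have "as ! i = as ! (\<sigma> i)" using h True by simp
            ultimately show ?thesis using nth_eq_iff_index_eq[OF dA(1), of i "\<sigma> i"] True by (simp add: n_def)
          next
            case False then show ?thesis using s by (simp add: permutes_not_in)
          qed
        qed
      qed simp
      then show "of_int (sign \<sigma>) * of_bool (\<forall>i\<in>{..<n}. as ! i = bs ! (\<sigma> i)) = (if \<sigma> = id then (1::'a) else 0)"
        by (auto simp: bs sign_id)
    qed
    also have "\<dots> = 1" using permutes_id[of "{..<n}"] fin by (simp add: sum.delta')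
    finally show ?thesis using ep bs True by simp
  next
    case False
    have "(\<Sum>\<sigma>\<in>{\<sigma>. \<sigma> permutes {..<n}}. of_int (sign \<sigma>) * of_bool (\<forall>i\<in>{..<n}. as ! i = bs ! (\<sigma> i))) = (0::'a)"
      if len: "length as = length bs"
    proof (rule sum.neutral, rule ballI)
      fix \<sigma> assume s: "\<sigma> \<in> {\<sigma>. \<sigma> permutes {..<n}}"
      have "\<not> (\<forall>i\<in>{..<n}. as ! i = bs ! (\<sigma> i))"
      proof
        assume h: "\<forall>i\<in>{..<n}. as ! i = bs ! (\<sigma> i)"
        have "A \<subseteq> B"
        proof
          fix x assume "x \<in> A"
          then obtain i where i: "i < n" "x = as ! i" using dA(2) by (auto simp: n_def in_set_conv_nth)
          then have "\<sigma> i < n" using permutes_in_image[of \<sigma> "{..<n}" i] s by simp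
          then show "x \<in> B" using h i len dB(2) by (auto simp: n_def)
        qed
        moreover have "card A = card B" using dA dB len by simp
        ultimately show False using False by (simp add: card_subset_eq)
      qed
      then have "(of_bool (\<forall>i\<in>{..<n}. as ! i = bs ! (\<sigma> i)) :: 'a) = 0" by (simp only: of_bool_eq(1))
      then show "of_int (sign \<sigma>) * of_bool (\<forall>i\<in>{..<n}. as ! i = bs ! (\<sigma> i)) = (0::'a)" by (simp only: mult_zero_right)
    qed
    then show ?thesis using ep False by auto
  qed
qed

lemma pairing_eq:
  fixes \<omega> \<xi> :: "'m::{finite,linorder} set \<Rightarrow> ('a::comm_ring_1, 'n::{finite,linorder}) mpoly"
  shows "pairing \<omega> \<xi> = (\<Sum>A\<in>UNIV. pp (\<omega> A) (\<xi> A))"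
proof -
  have d: "\<And>A (g::'m set \<Rightarrow> 'a). (\<Sum>B\<in>UNIV. (if A = B then 1 else 0) * g B) = g A"
  proof -
    fix A and g :: "'m set \<Rightarrow> 'a"
    have "(\<Sum>B\<in>UNIV. (if A = B then 1 else 0) * g B) = (\<Sum>B\<in>UNIV. if A = B then g B else 0)"
      by (intro sum.cong) auto
    then show "(\<Sum>B\<in>UNIV. (if A = B then 1 else 0) * g B) = g A" by simp
  qed
  have "pairing \<omega> \<xi> = (\<Sum>A\<in>UNIV. \<Sum>\<alpha>\<in>kz (\<omega> A). \<Sum>\<beta>\<in>kz (\<xi> A). lk (\<omega> A) \<alpha> * lk (\<xi> A) \<beta> * sym_pair \<alpha> \<beta>)"
    unfolding pairing_def ext_pair_eq by (rule sum.cong[OF refl], rule d)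
  also have "\<dots> = (\<Sum>A\<in>UNIV. pp (\<omega> A) (\<xi> A))"
  proof (rule sum.cong[OF refl])
    fix A
    let ?f = "\<omega> A" and ?g = "\<xi> A"
    have "(\<Sum>\<alpha>\<in>kz ?f. \<Sum>\<beta>\<in>kz ?g. lk ?f \<alpha> * lk ?g \<beta> * sym_pair \<alpha> \<beta>) = (\<Sum>\<alpha>\<in>kz ?f. if \<alpha> \<in> kz ?g then lk ?f \<alpha> * lk ?g \<alpha> * of_nat (pfact \<alpha>) else 0)"
      by (intro sum.cong refl) (simp add: sym_pair_eq if_distrib sum.delta cong: if_cong)
    also have "\<dots> = pp ?f ?g" unfolding pp_def by (intro sum.cong refl) (auto simp: in_keys_iff)
    finally show "(\<Sum>\<alpha>\<in>kz ?f. \<Sum>\<beta>\<in>kz ?g. lk ?f \<alpha> * lk ?g \<beta> * sym_pair \<alpha> \<beta>) = pp ?f ?g" .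
  qed
  finally show ?thesis .
qed

definition adj :: "('m::{finite,linorder} \<Rightarrow> ('a::comm_ring_1, 'n::{finite,linorder}) mpoly) \<Rightarrow> ('m set \<Rightarrow> ('a, 'n) mpoly) \<Rightarrow> ('m set \<Rightarrow> ('a, 'n) mpoly)" where
  "adj s \<xi> = (\<lambda>A. \<Sum>a\<in>UNIV. s a * iota a \<xi> A)"

lemma sum_reindex_insert:
  fixes g :: "'m::finite set \<Rightarrow> 'b::comm_monoid_add"
  shows "(\<Sum>B\<in>UNIV. if a \<in> B then g B else 0) = (\<Sum>A\<in>UNIV. if a \<notin> A then g (insert a A) else 0)"
proof -
  have "(\<Sum>B\<in>UNIV. if a \<in> B then g B else 0) = (\<Sum>B\<in>{B. a \<in> B}. g B)"
    by (simp add: sum.If_cases Int_def)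
  also have "\<dots> = (\<Sum>A\<in>{A. a \<notin> A}. g (insert a A))"
    by (rule sum.reindex_bij_witness[of _ "insert a" "\<lambda>B. B - {a}"]) (auto simp: insert_absorb)
  also have "\<dots> = (\<Sum>A\<in>UNIV. if a \<notin> A then g (insert a A) else 0)"
    by (simp add: sum.If_cases Int_def)
  finally show ?thesis .
qed

lemma card_less_insert_self: "card {c\<in>insert a A. c < a} = card {c\<in>A. (c::'m::linorder) < a}"
proof -
  have "{c\<in>insert a A. c < a} = {c\<in>A. c < a}" by auto
  then show ?thesis by simp
qed

lemma pp_uminus2: "pp f (- g) = - pp f g"
  using pp_add2[of f g "-g"] by (simp add: add_eq_0_iff)

lemma pp_neg1pow2: "pp f ((-1)^n * g) = (-1)^n * pp f g"
  by (cases "even n") (simp_all add: pp_uminus2)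

lemma card_less_insert_self': "card {c. (c = a \<or> c \<in> A) \<and> c < a} = card {c\<in>A. (c::'m::linorder) < a}"
  using card_less_insert_self[of a A] by simp

lemma adjoint:
  fixes s :: "'m::{finite,linorder} \<Rightarrow> ('a::comm_ring_1, 'n::{finite,linorder}) mpoly"
  shows "pairing (dstar s \<omega>) \<xi> = pairing \<omega> (adj s \<xi>)"
proof -
  have "pairing (dstar s \<omega>) \<xi> = (\<Sum>B\<in>UNIV. \<Sum>a\<in>UNIV. if a \<in> B then (-1)^card {c\<in>B. c < a} * pp (\<omega> (B - {a})) (s a * \<xi> B) else 0)"
    unfolding pairing_eq dstar_def
    by (simp add: pp_sum1 eps_def Dform_def pp_neg1pow1 pp_dop if_distrib[of "\<lambda>x. pp x _"] cong: if_cong)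
  also have "\<dots> = (\<Sum>a\<in>UNIV. \<Sum>B\<in>UNIV. if a \<in> B then (-1)^card {c\<in>B. c < a} * pp (\<omega> (B - {a})) (s a * \<xi> B) else 0)"
    by (rule sum.swap)
  also have "\<dots> = (\<Sum>a\<in>UNIV. \<Sum>A\<in>UNIV. if a \<notin> A then (-1)^card {c\<in>A. c < a} * pp (\<omega> A) (s a * \<xi> (insert a A)) else 0)"
  proof (rule sum.cong[OF refl])
    fix a :: 'm
    have "(\<Sum>B\<in>UNIV. if a \<in> B then (-1)^card {c\<in>B. c < a} * pp (\<omega> (B - {a})) (s a * \<xi> B) else 0)
       = (\<Sum>A\<in>UNIV. if a \<notin> A then (-1)^card {c\<in>insert a A. c < a} * pp (\<omega> (insert a A - {a})) (s a * \<xi> (insert a A)) else 0)"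
      by (rule sum_reindex_insert)
    also have "\<dots> = (\<Sum>A\<in>UNIV. if a \<notin> A then (-1)^card {c\<in>A. c < a} * pp (\<omega> A) (s a * \<xi> (insert a A)) else 0)"
      by (intro sum.cong refl) (auto simp: card_less_insert_self card_less_insert_self')
    finally show "(\<Sum>B\<in>UNIV. if a \<in> B then (-1)^card {c\<in>B. c < a} * pp (\<omega> (B - {a})) (s a * \<xi> B) else 0)
       = (\<Sum>A\<in>UNIV. if a \<notin> A then (-1)^card {c\<in>A. c < a} * pp (\<omega> A) (s a * \<xi> (insert a A)) else 0)" .
  qed
  also have "\<dots> = (\<Sum>A\<in>UNIV. \<Sum>a\<in>UNIV. if a \<notin> A then (-1)^card {c\<in>A. c < a} * pp (\<omega> A) (s a * \<xi> (insert a A)) else 0)"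
    by (rule sum.swap)
  also have "\<dots> = pairing \<omega> (adj s \<xi>)"
    unfolding pairing_eq adj_def
    by (intro sum.cong refl) (simp add: pp_sum2 iota_def pp_neg1pow2 mult.left_commute[of "s _"] if_distrib[of "\<lambda>x. pp _ (_ * x)"] cong: if_cong)
  finally show ?thesis .
qed

lemma iota_add: "iota a (\<lambda>C. X C + Y C) C = iota a X C + (iota a Y C :: 'b::ring_1)"
  by (simp add: iota_def distrib_left)

lemma iota_zero: "iota a (\<lambda>_. 0) C = (0 :: 'b::ring_1)"
  by (simp add: iota_def)

lemma adj_add: "adj s (\<lambda>C. X C + Y C) C = adj s X C + adj s Y C"
  unfolding adj_def iota_add by (simp add: distrib_left sum.distrib)

lemma adj_zero: "adj s (\<lambda>_. 0) = (\<lambda>_. 0)"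
  unfolding adj_def iota_zero by simp

lemma adj_wedge: "adj s (wedge c h) C = wedge (adj s c) h C + wedge (\<lambda>A. (-1)^card A * c A) (adj s h) C"
proof -
  have "adj s (wedge c h) C = (\<Sum>a\<in>UNIV. s a * wedge (iota a c) h C) + (\<Sum>a\<in>UNIV. s a * wedge (\<lambda>A. (-1)^card A * c A) (iota a h) C)"
    unfolding adj_def by (simp add: iota_wedge distrib_left sum.distrib)
  also have "(\<Sum>a\<in>UNIV. s a * wedge (iota a c) h C) = wedge (adj s c) h C"
    unfolding adj_def by (rule wedge_lin1[symmetric])
  also have "(\<Sum>a\<in>UNIV. s a * wedge (\<lambda>A. (-1)^card A * c A) (iota a h) C) = wedge (\<lambda>A. (-1)^card A * c A) (adj s h) C"
    unfolding adj_def by (rule wedge_lin2[symmetric])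
  finally show ?thesis .
qed

lemma adj_JM_step:
  "adj s (\<lambda>C. wedge c h C + \<xi> C) = (\<lambda>C. wedge (adj s c) h C + (\<lambda>C. wedge (\<lambda>A. (-1)^card A * c A) (adj s h) C + adj s \<xi> C) C)"
  by (rule ext) (simp add: adj_add adj_wedge add.assoc)

lemma JM_closed:
  assumes xi: "\<xi> \<in> JM G \<rho>"
    and inv: "\<And>h. \<forall>g\<in>G. act_SVLM g \<rho> h = h \<Longrightarrow> \<forall>g\<in>G. act_SVLM g \<rho> (adj s h) = adj s h"
    and deg: "\<And>h d. homog_form d h \<Longrightarrow> d > 0 \<Longrightarrow> homog_form (d + e - 1) (adj s h)"
    and e: "e > 0"
  shows "adj s \<xi> \<in> JM G \<rho>"
  using xi
proof (induct rule: JM.induct)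
  case JM_zero
  then show ?case by (simp add: adj_zero JM.JM_zero)
next
  case (JM_add h d \<xi> c)
  have "(\<lambda>C. wedge (\<lambda>A. (-1)^card A * c A) (adj s h) C + adj s \<xi> C) \<in> JM G \<rho>"
    by (rule JM.JM_add[OF inv[OF JM_add(1)] deg[OF JM_add(2,3)] _ JM_add(5)]) (use JM_add(3) e in simp)
  then show ?case unfolding adj_JM_step by (rule JM.JM_add[OF JM_add(1,2,3)])
qed

lemma act_SV_add: "act_SV g (p + q) = act_SV g p + act_SV g q"
  by (simp add: act_SV_def psubst_add)
lemma act_SV_mult: "act_SV g (p * q) = act_SV g p * act_SV g q"
  by (simp add: act_SV_def psubst_mult)
lemma act_SV_sum: "act_SV g (sum f S) = (\<Sum>x\<in>S. act_SV g (f x))"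
  by (simp add: act_SV_def psubst_sum)
lemma act_SV_0: "act_SV g 0 = 0"
  by (simp add: act_SV_def)
lemma act_SV_1: "act_SV g 1 = 1"
  by (simp add: act_SV_def psubst_1)
lemma act_SV_pconst: "act_SV g (pconst c) = pconst c"
  by (simp add: act_SV_def psubst_pconst)
lemma act_SV_neg1pow: "act_SV g ((-1)^n * p) = (-1)^n * act_SV g p"
  by (simp add: act_SV_def psubst_neg1pow)

lemma act_SV_iota: "act_SV g (iota a h A) = iota a (\<lambda>B. act_SV g (h B)) A"
  by (simp add: iota_def act_SV_neg1pow act_SV_0)

lemma pconst_neg1pow: "pconst ((-1::'a::comm_ring_1)^n) = (-1)^n"
  by (induct n) (simp_all add: pconst_1 pconst_mult pconst_minus)

lemma pconst_iota:
  fixes f :: "'m::linorder set \<Rightarrow> 'a::comm_ring_1"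
  shows "pconst (iota b f C) = iota b (\<lambda>A. pconst (f A)) C"
  by (simp add: iota_def pconst_mult pconst_neg1pow)

lemma iota_lin: "iota b (\<lambda>C'. \<Sum>A\<in>S. F A C' * Y A) C = (\<Sum>A\<in>S. iota b (F A) C * (Y A :: 'b::comm_ring_1))"
  by (simp add: iota_def sum_distrib_left mult.assoc)

lemma iota_Lam:
  fixes R :: "('a::comm_ring_1, 'm::{finite,linorder}) sqmat" and Y :: "'m set \<Rightarrow> ('a, 'n::{finite,linorder}) mpoly"
  shows "iota b (\<lambda>C'. \<Sum>A\<in>UNIV. pconst (ext_act R A C') * Y A) C
       = (\<Sum>c\<in>UNIV. pconst (R $ b $ c) * (\<Sum>A\<in>UNIV. pconst (ext_act R A C) * iota c Y A))"
proof -
  have "iota b (\<lambda>C'. \<Sum>A\<in>UNIV. pconst (ext_act R A C') * Y A) C = (\<Sum>A\<in>UNIV. pconst (iota b (ext_act R A) C) * Y A)"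
    by (simp add: iota_lin pconst_iota)
  also have "\<dots> = (\<Sum>A\<in>UNIV. \<Sum>c\<in>UNIV. if c \<in> A then pconst (R $ b $ c * sgc (A - {c}) c * ext_act R (A - {c}) C) * Y A else 0)"
  proof (rule sum.cong[OF refl])
    fix A :: "'m set"
    have "pconst (iota b (ext_act R A) C) * Y A = (\<Sum>c\<in>A. pconst (R $ b $ c * sgc (A - {c}) c * ext_act R (A - {c}) C) * Y A)"
      by (simp add: K_set pconst_sum sum_distrib_right)
    also have "\<dots> = (\<Sum>c\<in>UNIV. if c \<in> A then pconst (R $ b $ c * sgc (A - {c}) c * ext_act R (A - {c}) C) * Y A else 0)"
      by (simp add: sum.If_cases)
    finally show "pconst (iota b (ext_act R A) C) * Y A = (\<Sum>c\<in>UNIV. if c \<in> A then pconst (R $ b $ c * sgc (A - {c}) c * ext_act R (A - {c}) C) * Y A else 0)" .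
  qed
  also have "\<dots> = (\<Sum>c\<in>UNIV. \<Sum>A\<in>UNIV. if c \<in> A then pconst (R $ b $ c * sgc (A - {c}) c * ext_act R (A - {c}) C) * Y A else 0)"
    by (rule sum.swap)
  also have "\<dots> = (\<Sum>c\<in>UNIV. \<Sum>A\<in>UNIV. if c \<notin> A then pconst (R $ b $ c * sgc (insert c A - {c}) c * ext_act R (insert c A - {c}) C) * Y (insert c A) else 0)"
    by (rule sum.cong[OF refl], rule sum_reindex_insert)
  also have "\<dots> = (\<Sum>c\<in>UNIV. pconst (R $ b $ c) * (\<Sum>A\<in>UNIV. pconst (ext_act R A C) * iota c Y A))"
  proof (rule sum.cong[OF refl])
    fix c :: 'm
    have "(\<Sum>A\<in>UNIV. if c \<notin> A then pconst (R $ b $ c * sgc (insert c A - {c}) c * ext_act R (insert c A - {c}) C) * Y (insert c A) else 0)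
        = (\<Sum>A\<in>UNIV. pconst (R $ b $ c) * (pconst (ext_act R A C) * iota c Y A))"
    proof (rule sum.cong[OF refl])
      fix A :: "'m set"
      show "(if c \<notin> A then pconst (R $ b $ c * sgc (insert c A - {c}) c * ext_act R (insert c A - {c}) C) * Y (insert c A) else 0)
        = pconst (R $ b $ c) * (pconst (ext_act R A C) * iota c Y A)"
      proof (cases "c \<in> A")
        case True then show ?thesis by (simp add: iota_alt)
      next
        case False
        then have "insert c A - {c} = A" by auto
        then show ?thesis using False
          by (simp add: iota_alt pconst_mult sgc_def pconst_neg1pow mult_ac)
      qed
    qed
    then show "(\<Sum>A\<in>UNIV. if c \<notin> A then pconst (R $ b $ c * sgc (insert c A - {c}) c * ext_act R (insert c A - {c}) C) * Y (insert c A) else 0)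
        = pconst (R $ b $ c) * (\<Sum>A\<in>UNIV. pconst (ext_act R A C) * iota c Y A)"
      by (simp add: sum_distrib_left)
  qed
  finally show ?thesis .
qed

lemma Lam_iota:
  fixes R Ri :: "('a::comm_ring_1, 'm::{finite,linorder}) sqmat" and Y :: "'m set \<Rightarrow> ('a, 'n::{finite,linorder}) mpoly"
  assumes inv: "Ri ** R = mat 1"
  shows "(\<Sum>A\<in>UNIV. pconst (ext_act R A C) * iota a Y A)
       = (\<Sum>b\<in>UNIV. pconst (Ri $ a $ b) * iota b (\<lambda>C'. \<Sum>A\<in>UNIV. pconst (ext_act R A C') * Y A) C)"
proof -
  define Z where "Z c = (\<Sum>A\<in>UNIV. pconst (ext_act R A C) * iota c Y A)" for c
  have "(\<Sum>b\<in>UNIV. pconst (Ri $ a $ b) * iota b (\<lambda>C'. \<Sum>A\<in>UNIV. pconst (ext_act R A C') * Y A) C)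
      = (\<Sum>b\<in>UNIV. \<Sum>c\<in>UNIV. pconst (Ri $ a $ b * R $ b $ c) * Z c)"
    unfolding iota_Lam Z_def[symmetric] by (simp add: sum_distrib_left pconst_mult mult.assoc)
  also have "\<dots> = (\<Sum>c\<in>UNIV. pconst ((Ri ** R) $ a $ c) * Z c)"
    by (subst sum.swap) (simp add: matrix_matrix_mult_def pconst_sum sum_distrib_right)
  also have "\<dots> = (\<Sum>c\<in>UNIV. if a = c then Z c else 0)"
    by (intro sum.cong refl) (simp add: inv mat_def pconst_1)
  also have "\<dots> = Z a" by simp
  finally show ?thesis by (simp add: Z_def)
qed

lemma adj_invariant:
  assumes h: "act_SVLM g \<rho> h = h" and s: "act_SVMs g \<rho> s = s"
    and inv: "matrix_inv (\<rho> g) ** \<rho> g = mat 1"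
  shows "act_SVLM g \<rho> (adj s h) = adj s h"
proof
  fix C
  let ?R = "\<rho> g" and ?Ri = "matrix_inv (\<rho> g)"
  have "act_SVLM g \<rho> (adj s h) C = (\<Sum>A\<in>UNIV. pconst (ext_act ?R A C) * (\<Sum>a\<in>UNIV. act_SV g (s a) * iota a (\<lambda>B. act_SV g (h B)) A))"
    by (simp add: act_SVLM_def adj_def act_SV_sum act_SV_mult act_SV_iota)
  also have "\<dots> = (\<Sum>a\<in>UNIV. act_SV g (s a) * (\<Sum>A\<in>UNIV. pconst (ext_act ?R A C) * iota a (\<lambda>B. act_SV g (h B)) A))"
    by (simp add: sum_distrib_left mult.left_commute) (rule sum.swap)
  also have "\<dots> = (\<Sum>a\<in>UNIV. act_SV g (s a) * (\<Sum>b\<in>UNIV. pconst (?Ri $ a $ b) * iota b (act_SVLM g \<rho> h) C))"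
    unfolding Lam_iota[OF inv] by (simp add: act_SVLM_def)
  also have "\<dots> = (\<Sum>b\<in>UNIV. (\<Sum>a\<in>UNIV. pconst (?Ri $ a $ b) * act_SV g (s a)) * iota b h C)"
    unfolding h by (simp add: sum_distrib_left sum_distrib_right mult_ac) (rule sum.swap)
  also have "\<dots> = (\<Sum>b\<in>UNIV. s b * iota b h C)"
    using fun_cong[OF s] by (simp add: act_SVMs_def)
  finally show "act_SVLM g \<rho> (adj s h) C = adj s h C" by (simp add: adj_def)
qed

lemma keys_neg1pow: "kz ((-1)^n * (p :: ('a::comm_ring_1, 'n) mpoly)) = kz p"
  by (cases "even n") simp_all

lemma adj_homog:
  assumes h: "homog_form d h" and s: "\<forall>a. homog_poly e (s a)"
  shows "homog_form (d + e - 1) (adj s h)"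
  unfolding homog_form_def
proof (intro allI ballI)
  fix A \<alpha> assume "\<alpha> \<in> kz (adj s h A)"
  then have "\<alpha> \<in> (\<Union>a\<in>UNIV. kz (s a * iota a h A))"
    unfolding adj_def by (rule subsetD[OF keys_sum])
  then obtain a where a: "\<alpha> \<in> kz (s a * iota a h A)" by (rule UN_E)
  have "\<alpha> \<in> {x + y |x y. x \<in> kz (s a) \<and> y \<in> kz (iota a h A)}"
    using a by (rule subsetD[OF keys_mult])
  then obtain \<beta> \<gamma> where bg: "\<alpha> = \<beta> + \<gamma>" "\<beta> \<in> kz (s a)" "\<gamma> \<in> kz (iota a h A)"
    by auto
  have aA: "a \<notin> A" using bg(3) by (auto simp: iota_def split: if_splits)
  then have "\<gamma> \<in> kz (h (insert a A))" using bg(3) by (simp add: iota_def keys_neg1pow)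
  then have "mdeg \<gamma> + card (insert a A) = d" using h by (simp add: homog_form_def)
  moreover have "card (insert a A) = card A + 1" using aA by simp
  moreover have "mdeg \<beta> = e" using s bg(2) by (simp add: homog_poly_def)
  ultimately show "mdeg \<alpha> + card A = d + e - 1" using bg(1) by (simp add: mdeg_add)
qed

lemma inv_props:
  fixes A :: "'a::field^'n^'n"
  assumes "invertible A"
  shows "A ** matrix_inv A = mat 1 \<and> matrix_inv A ** A = mat 1"
  using assms unfolding invertible_def matrix_inv_def by (rule someI_ex)

lemma rho_inv:
  assumes grp: "finite_matrix_group G" and rep: "matrix_rep G \<rho>" and g: "g \<in> G"
  shows "matrix_inv (\<rho> g) ** \<rho> g = mat 1"
proof -
  have gi: "invertible g" "matrix_inv g \<in> G" using grp g by (auto simp: finite_matrix_group_def)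
  have "g ** matrix_inv g = mat 1" "matrix_inv g ** g = mat 1" using inv_props[OF gi(1)] by auto
  then have "\<rho> g ** \<rho> (matrix_inv g) = mat 1" "\<rho> (matrix_inv g) ** \<rho> g = mat 1"
    using rep g gi(2) unfolding matrix_rep_def by metis+
  then have "invertible (\<rho> g)" unfolding invertible_def by blast
  then show ?thesis using inv_props by blast
qed

lemma mv_sum: "(A::'a::comm_ring_1^'m::finite^'m) *v (\<Sum>g\<in>S. f g) = (\<Sum>g\<in>S. A *v f g)"
  by (induct S rule: infinite_finite_induct) (simp_all add: matrix_vector_right_distrib)

lemma averaging:
  fixes G :: "('a::field_char_0, 'n::finite) sqmat set" and \<rho> :: "('a, 'n) sqmat \<Rightarrow> ('a, 'm::finite) sqmat"
  assumes grp: "finite_matrix_group G" and rep: "matrix_rep G \<rho>"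
    and fix0: "\<forall>v::('a, 'm) vec. (\<forall>g\<in>G. \<rho> g *v v = v) \<longrightarrow> v = 0"
    and H: "\<forall>g\<in>G. \<forall>c. (\<Sum>b\<in>UNIV. u b * \<rho> g $ b $ c) = u c"
  shows "u c = 0"
proof -
  have finG: "finite G" and oneG: "mat 1 \<in> G" and mulG: "\<And>g h. g \<in> G \<Longrightarrow> h \<in> G \<Longrightarrow> g ** h \<in> G"
    and invG: "\<And>g. g \<in> G \<Longrightarrow> invertible g"
    using grp by (auto simp: finite_matrix_group_def)
  define v :: "('a, 'm) vec" where "v = axis c 1"
  define w where "w = (\<Sum>g\<in>G. \<rho> g *v v)"
  have "\<forall>h\<in>G. \<rho> h *v w = w"
  proof
    fix h assume h: "h \<in> G"
    have inj: "inj_on (\<lambda>g. h ** g) G"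
    proof (rule inj_onI)
      fix x y assume "x \<in> G" "y \<in> G" "h ** x = h ** y"
      then have "matrix_inv h ** (h ** x) = matrix_inv h ** (h ** y)" by simp
      then show "x = y" using inv_props[OF invG[OF h]] by (simp add: matrix_mul_assoc)
    qed
    have im: "(\<lambda>g. h ** g) ` G = G"
      by (rule endo_inj_surj[OF finG _ inj]) (use mulG h in auto)
    have "\<rho> h *v w = (\<Sum>g\<in>G. \<rho> (h ** g) *v v)"
      unfolding w_def mv_sum using rep h
      by (intro sum.cong refl) (simp add: matrix_vector_mul_assoc matrix_rep_def)
    also have "\<dots> = (\<Sum>g\<in>(\<lambda>g. h ** g) ` G. \<rho> g *v v)"
      by (simp add: sum.reindex[OF inj])
    also have "\<dots> = w" unfolding im w_def ..
    finally show "\<rho> h *v w = w" .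
  qed
  then have w0: "w = 0" using fix0 by blast
  have wb: "w $ b = (\<Sum>g\<in>G. \<rho> g $ b $ c)" for b
  proof -
    have "\<And>x. (\<Sum>j\<in>UNIV. \<rho> x $ b $ j * (if j = c then 1 else 0)) = (\<Sum>j\<in>UNIV. if j = c then \<rho> x $ b $ j else 0)"
      by (intro sum.cong) auto
    then show ?thesis unfolding w_def v_def by (simp add: matrix_vector_mult_def axis_def)
  qed
  have "of_nat (card G) * u c = (\<Sum>g\<in>G. u c)" by simp
  also have "\<dots> = (\<Sum>g\<in>G. \<Sum>b\<in>UNIV. u b * \<rho> g $ b $ c)"
    using H by (intro sum.cong refl) simp
  also have "\<dots> = (\<Sum>b\<in>UNIV. u b * w $ b)"
    unfolding wb by (subst sum.swap) (simp add: sum_distrib_left)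
  also have "\<dots> = 0" by (simp add: w0)
  finally have "of_nat (card G) * u c = 0" .
  moreover have "card G \<noteq> 0" using finG oneG by auto
  ultimately show ?thesis by simp
qed

lemma homog0_const:
  fixes p :: "('a::comm_ring_1, 'n::finite) mpoly"
  assumes "homog_poly 0 p"
  shows "p = pconst (lk p 0)"
proof (rule poly_mapping_eqI)
  fix \<alpha>
  show "lk p \<alpha> = lk (pconst (lk p 0)) \<alpha>"
  proof (cases "\<alpha> = 0")
    case True then show ?thesis by (simp add: lookup_pconst)
  next
    case False
    then have "\<alpha> \<notin> kz p" using assms mdeg_0_iff[of \<alpha>] by (auto simp: homog_poly_def)
    then show ?thesis using False by (simp add: lookup_pconst in_keys_iff)
  qed
qed

lemma SV_inv_0: "0 \<in> SV_inv G" by (simp add: SV_inv_def act_SV_0)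
lemma SV_inv_1: "1 \<in> SV_inv G" by (simp add: SV_inv_def act_SV_1)

lemma basis_nonzero:
  fixes w :: "'i::finite \<Rightarrow> 'm::finite \<Rightarrow> ('a::field, 'n::finite) mpoly" and G :: "('a^'n^'n) set"
  assumes b: "homog_free_basis G Inv w"
  shows "w j \<noteq> (\<lambda>a. 0)"
proof
  assume wj: "w j = (\<lambda>a. 0)"
  have xin: "w j \<in> Inv" using b by (simp add: homog_free_basis_def)
  then have ex1: "\<exists>!f. (\<forall>i. f i \<in> SV_inv G) \<and> w j = (\<lambda>a. \<Sum>i\<in>UNIV. f i * w i a)"
    using b by (simp add: homog_free_basis_def)
  define f1 :: "'i \<Rightarrow> ('a, 'n) mpoly" where "f1 = (\<lambda>i. 0)"
  define f2 :: "'i \<Rightarrow> ('a, 'n) mpoly" where "f2 = (\<lambda>i. if i = j then 1 else 0)"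
  have P1: "(\<forall>i. f1 i \<in> SV_inv G) \<and> w j = (\<lambda>a. \<Sum>i\<in>UNIV. f1 i * w i a)"
    using wj by (simp add: f1_def SV_inv_0)
  have P2: "(\<forall>i. f2 i \<in> SV_inv G) \<and> w j = (\<lambda>a. \<Sum>i\<in>UNIV. f2 i * w i a)"
  proof
    show "\<forall>i. f2 i \<in> SV_inv G" by (simp add: f2_def SV_inv_0 SV_inv_1)
    have "\<And>a. (\<Sum>i\<in>UNIV. f2 i * w i a) = (\<Sum>i\<in>UNIV. if i = j then w i a else 0)"
      by (intro sum.cong) (auto simp: f2_def)
    then show "w j = (\<lambda>a. \<Sum>i\<in>UNIV. f2 i * w i a)" using wj by simp
  qed
  have "f1 = f2" using ex1 P1 P2 by blast
  then have "(0::('a, 'n) mpoly) = 1" unfolding f1_def f2_def by (metis (mono_tags))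
  then show False by simp
qed

lemma deg_pos_SVM:
  fixes G :: "('a::field_char_0, 'n::{finite,linorder}) sqmat set"
    and \<rho> :: "('a, 'n) sqmat \<Rightarrow> ('a, 'm::{finite,linorder}) sqmat"
    and wM :: "'m \<Rightarrow> 'm \<Rightarrow> ('a, 'n) mpoly"
  assumes basis: "homog_free_basis G (SVM_inv G \<rho>) wM"
    and fix0: "\<forall>v::('a, 'm) vec. (\<forall>g\<in>G. \<rho> g *v v = v) \<longrightarrow> v = 0"
  shows "\<exists>d>0. \<forall>a. homog_poly d (wM j a)"
proof -
  have "\<exists>d. \<forall>a. homog_poly d (wM j a)" using basis by (simp add: homog_free_basis_def)
  then obtain d where hd: "\<forall>a. homog_poly d (wM j a)" by blast
  have "d \<noteq> 0"
  proof
    assume d0: "d = 0"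
    define u where "u a = lk (wM j a) 0" for a
    have wc: "wM j a = pconst (u a)" for a using homog0_const hd d0 u_def by metis
    have inv: "\<forall>g\<in>G. act_SVM g \<rho> (wM j) = wM j" using basis by (simp add: homog_free_basis_def SVM_inv_def)
    define U :: "('a, 'm) vec" where "U = (\<chi> a. u a)"
    have "\<forall>g\<in>G. \<rho> g *v U = U"
    proof
      fix g assume g: "g \<in> G"
      show "\<rho> g *v U = U"
      unfolding vec_eq_iff
      proof
        fix b
        have "act_SVM g \<rho> (wM j) b = wM j b" using inv g by simp
        then have "(pconst (\<Sum>a\<in>UNIV. \<rho> g $ b $ a * u a) :: ('a, 'n) mpoly) = pconst (u b)"
          by (simp add: act_SVM_def wc act_SV_pconst pconst_mult pconst_sum)
        then have "(\<Sum>a\<in>UNIV. \<rho> g $ b $ a * u a) = u b" by (rule pconst_inj)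
        then show "(\<rho> g *v U) $ b = U $ b" by (simp add: matrix_vector_mult_def U_def)
      qed
    qed
    then have "U = 0" using fix0 by blast
    then have "\<And>a. u a = 0" unfolding U_def by (metis vec_lambda_beta zero_index)
    then have "wM j = (\<lambda>a. 0)" using wc by (simp add: fun_eq_iff)
    then show False using basis_nonzero[OF basis] by blast
  qed
  then show ?thesis using hd by blast
qed

lemma deg0_SVMs:
  fixes G :: "('a::field_char_0, 'n::{finite,linorder}) sqmat set"
    and \<rho> :: "('a, 'n) sqmat \<Rightarrow> ('a, 'm::{finite,linorder}) sqmat"
    and s :: "'m \<Rightarrow> ('a, 'n) mpoly"
  assumes grp: "finite_matrix_group G" and rep: "matrix_rep G \<rho>"
    and fix0: "\<forall>v::('a, 'm) vec. (\<forall>g\<in>G. \<rho> g *v v = v) \<longrightarrow> v = 0"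
    and sinv: "s \<in> SVMs_inv G \<rho>"
    and h0: "\<forall>a. homog_poly 0 (s a)"
  shows "s = (\<lambda>a. 0)"
proof -
  define u where "u a = lk (s a) 0" for a
  have sc: "s a = pconst (u a)" for a using homog0_const h0 u_def by metis
  have H: "\<forall>g\<in>G. \<forall>c. (\<Sum>b\<in>UNIV. u b * \<rho> g $ b $ c) = u c"
  proof (intro ballI allI)
    fix g c assume g: "g \<in> G"
    let ?Ri = "matrix_inv (\<rho> g)"
    have e: "(\<Sum>a\<in>UNIV. ?Ri $ a $ b * u a) = u b" for b
    proof -
      have "act_SVMs g \<rho> s b = s b" using sinv g by (simp add: SVMs_inv_def)
      then have "(pconst (\<Sum>a\<in>UNIV. ?Ri $ a $ b * u a) :: ('a, 'n) mpoly) = pconst (u b)"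
        by (simp add: act_SVMs_def sc act_SV_pconst pconst_mult pconst_sum)
      then show ?thesis by (rule pconst_inj)
    qed
    have "(\<Sum>b\<in>UNIV. u b * \<rho> g $ b $ c) = (\<Sum>b\<in>UNIV. (\<Sum>a\<in>UNIV. ?Ri $ a $ b * u a) * \<rho> g $ b $ c)"
      by (simp add: e)
    also have "\<dots> = (\<Sum>a\<in>UNIV. u a * (?Ri ** \<rho> g) $ a $ c)"
      by (simp add: matrix_matrix_mult_def sum_distrib_left sum_distrib_right mult_ac) (rule sum.swap)
    also have "\<dots> = (\<Sum>a\<in>UNIV. if a = c then u a else 0)"
      by (intro sum.cong refl) (simp add: rho_inv[OF grp rep g] mat_def)
    also have "\<dots> = u c" by simp
    finally show "(\<Sum>b\<in>UNIV. u b * \<rho> g $ b $ c) = u c" .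
  qed
  have "u c = 0" for c by (rule averaging[OF grp rep fix0 H])
  then show ?thesis using sc by (simp add: fun_eq_iff)
qed

section \<open>the anticommutator and the degree of L\<close>

lemma anticomm_key:
  fixes s t :: "'m::{finite,linorder} \<Rightarrow> ('a::comm_ring_1, 'n::{finite,linorder}) mpoly" and L0 :: "('a, 'n) mpoly"
  assumes hyp: "\<forall>\<omega> B. dstar s (deltastar t \<omega>) B + deltastar t (dstar s \<omega>) B = Dform L0 \<omega> B"
  shows "dop L0 P = (\<Sum>b\<in>UNIV. dop (t b) (dop (s b) P))"
proof -
  define \<omega> :: "'m set \<Rightarrow> ('a, 'n) mpoly" where "\<omega> = (\<lambda>A. if A = {} then P else 0)"
  have wi: "\<omega> (insert a B) = 0" for a B by (simp add: \<omega>_def)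
  have dz: "deltastar t \<omega> = (\<lambda>B. 0)"
  proof
    fix B
    have "iota a (Dform (t a) \<omega>) B = 0" for a
      by (simp add: iota_def Dform_def wi)
    then show "deltastar t \<omega> B = 0" unfolding deltastar_def by simp
  qed
  have ez: "eps a (\<lambda>_. 0) C = (0 :: 'b::ring_1)" for a :: "'c::linorder" and C by (simp add: eps_def)
  have Dz: "Dform (s a) (\<lambda>B. 0) = (\<lambda>B. 0)" for a by (simp add: Dform_def)
  have dz2: "dstar s (\<lambda>B. 0) = (\<lambda>B. 0)"
    by (rule ext) (simp add: dstar_def Dz ez)
  have d1: "dstar s \<omega> {b} = dop (s b) P" for b
  proof -
    have "dstar s \<omega> {b} = (\<Sum>a\<in>UNIV. if a = b then dop (s b) P else 0)"
    proof -
      have e0: "{c. c = b \<and> c < b} = {}" by auto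
      show ?thesis unfolding dstar_def by (intro sum.cong refl) (auto simp: eps_def Dform_def \<omega>_def e0)
    qed
    then show ?thesis by simp
  qed
  have "deltastar t (dstar s \<omega>) {} = (\<Sum>b\<in>UNIV. dop (t b) (dstar s \<omega> {b}))"
    unfolding deltastar_def by (intro sum.cong refl) (simp add: iota_def Dform_def)
  also have "\<dots> = (\<Sum>b\<in>UNIV. dop (t b) (dop (s b) P))" by (simp add: d1)
  finally have "deltastar t (dstar s \<omega>) {} = (\<Sum>b\<in>UNIV. dop (t b) (dop (s b) P))" .
  moreover have "dstar s (deltastar t \<omega>) {} = 0" by (simp add: dz dz2)
  moreover have "Dform L0 \<omega> {} = dop L0 P" by (simp add: Dform_def \<omega>_def)
  moreover have "dstar s (deltastar t \<omega>) {} + deltastar t (dstar s \<omega>) {} = Dform L0 \<omega> {}"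
    using hyp by (rule allE[of _ \<omega>], elim allE[of _ "{}"])
  ultimately show ?thesis by simp
qed

lemma lk_dop_mono0: "lk (dop L (sgl \<beta> 1)) 0 = lk L \<beta> * of_nat (pfact \<beta>)"
proof -
  have "lk (dop L (sgl \<beta> 1)) 0 = (\<Sum>\<beta>'\<in>kz L. if \<beta>' = \<beta> then lk L \<beta> * of_nat (pfact \<beta>) else 0)"
    unfolding lk_dop by (intro sum.cong refl) (simp add: riseT_0 lookup_single)
  then show ?thesis by (auto simp: in_keys_iff)
qed

lemma L_homog:
  fixes s t :: "'m::{finite,linorder} \<Rightarrow> ('a::field_char_0, 'n::{finite,linorder}) mpoly" and L0 :: "('a, 'n) mpoly"
  assumes hyp: "\<forall>\<omega> B. dstar s (deltastar t \<omega>) B + deltastar t (dstar s \<omega>) B = Dform L0 \<omega> B"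
    and hs: "\<forall>a. homog_poly e (s a)" and ht: "\<forall>a. homog_poly d (t a)"
  shows "homog_poly (d + e) L0"
  unfolding homog_poly_def
proof (rule ballI, rule ccontr)
  fix \<beta> assume b: "\<beta> \<in> kz L0" and nd: "mdeg \<beta> \<noteq> d + e"
  have z: "lk (dop (t b) (dop (s b) (sgl \<beta> 1))) 0 = 0" for b
  proof -
    have "lk (dop (s b) (sgl \<beta> 1)) \<beta>' = 0" if "\<beta>' \<in> kz (t b)" for \<beta>'
    proof -
      have "mdeg \<beta>' = d" using ht that by (simp add: homog_poly_def)
      have "lk (sgl \<beta> 1) (\<beta>' + \<beta>'') = (0::'a)" if "\<beta>'' \<in> kz (s b)" for \<beta>''
      proof -
        have "mdeg \<beta>'' = e" using hs that by (simp add: homog_poly_def)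
        then have "\<beta>' + \<beta>'' \<noteq> \<beta>" using nd \<open>mdeg \<beta>' = d\<close> by (auto simp: mdeg_add)
        then show ?thesis by (simp add: lookup_single)
      qed
      then show ?thesis unfolding lk_dop by (intro sum.neutral) simp
    qed
    then show ?thesis unfolding lk_dop by (intro sum.neutral) simp
  qed
  have "lk (dop L0 (sgl \<beta> 1)) 0 = lk (\<Sum>b\<in>UNIV. dop (t b) (dop (s b) (sgl \<beta> 1))) 0"
    using anticomm_key[OF hyp] by simp
  also have "\<dots> = 0" by (simp add: lookup_sum z)
  finally have "lk L0 \<beta> * of_nat (pfact \<beta>) = (0::'a)" by (simp add: lk_dop_mono0)
  moreover have "of_nat (pfact \<beta>) \<noteq> (0::'a)" using pfact_pos[of \<beta>] by simp
  ultimately have "lk L0 \<beta> = 0" by simp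
  then show False using b by (simp add: in_keys_iff)
qed

theorem corollary5p6:
  fixes G :: "('a::field_char_0, 'n::{finite,linorder}) sqmat set"
    and \<rho> :: "('a, 'n) sqmat \<Rightarrow> ('a, 'm::{finite,linorder}) sqmat"
    and wMs :: "'m \<Rightarrow> 'm \<Rightarrow> ('a, 'n) mpoly"
    and wM :: "'m \<Rightarrow> 'm \<Rightarrow> ('a, 'n) mpoly"
    and L :: "'m \<Rightarrow> 'm \<Rightarrow> ('a, 'n) mpoly"
  assumes "finite_matrix_group G"
    and "G = gen_group {g\<in>G. pseudo_reflection g}"
    and "matrix_rep G \<rho>"
    and "\<forall>v::('a, 'm) vec. (\<forall>g\<in>G. \<rho> g *v v = v) \<longrightarrow> v = 0"
    and "homog_free_basis G (SVMs_inv G \<rho>) wMs"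
    and "homog_free_basis G (SVM_inv G \<rho>) wM"
    and "\<forall>i j. L i j \<in> SV_inv G"
    and "\<forall>i j \<omega> B. dstar (wMs i) (deltastar (wM j) \<omega>) B + deltastar (wM j) (dstar (wMs i) \<omega>) B
                   = Dform (L i j) \<omega> B"
  shows "(\<forall>i j. \<exists>d>0. homog_poly d (L i j))
       \<and> (\<forall>i. \<forall>\<omega>\<in>harmonics G \<rho>. dstar (wMs i) \<omega> \<in> harmonics G \<rho>)"
proof
  note grp = assms(1) and rep = assms(3) and fix0 = assms(4) and bMs = assms(5) and bM = assms(6)
  show "\<forall>i j. \<exists>d>0. homog_poly d (L i j)"
  proof (intro allI)
    fix i j
    have "\<exists>e. \<forall>a. homog_poly e (wMs i a)" using bMs by (simp add: homog_free_basis_def)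
    then obtain e where he: "\<forall>a. homog_poly e (wMs i a)" by blast
    obtain d where d: "d > 0" "\<forall>a. homog_poly d (wM j a)" using deg_pos_SVM[OF bM fix0, of j] by blast
    have hyp: "\<forall>\<omega> B. dstar (wMs i) (deltastar (wM j) \<omega>) B + deltastar (wM j) (dstar (wMs i) \<omega>) B = Dform (L i j) \<omega> B"
      using assms(8) by blast
    have "homog_poly (d + e) (L i j)" by (rule L_homog[OF hyp he d(2)])
    then show "\<exists>d>0. homog_poly d (L i j)" using d(1) by (intro exI[of _ "d + e"]) simp
  qed
  show "\<forall>i. \<forall>\<omega>\<in>harmonics G \<rho>. dstar (wMs i) \<omega> \<in> harmonics G \<rho>"
  proof (intro allI ballI)
    fix i \<omega> assume w: "\<omega> \<in> harmonics G \<rho>"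
    let ?s = "wMs i"
    have sinv: "?s \<in> SVMs_inv G \<rho>" using bMs by (simp add: homog_free_basis_def)
    have "\<exists>e. \<forall>a. homog_poly e (wMs i a)" using bMs by (simp add: homog_free_basis_def)
    then obtain e where he: "\<forall>a. homog_poly e (wMs i a)" by blast
    have adjJM: "adj ?s \<xi> \<in> JM G \<rho>" if xi: "\<xi> \<in> JM G \<rho>" for \<xi>
    proof (cases "e = 0")
      case True
      then have "?s = (\<lambda>a. 0)" using deg0_SVMs[OF grp rep fix0 sinv] he by simp
      then have "adj ?s \<xi> = (\<lambda>_. 0)" by (simp add: adj_def)
      then show ?thesis by (simp add: JM.JM_zero)
    next
      case False
      show ?thesis
      proof (rule JM_closed[OF xi])
        fix h :: "'m set \<Rightarrow> ('a, 'n) mpoly"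
        assume h: "\<forall>g\<in>G. act_SVLM g \<rho> h = h"
        show "\<forall>g\<in>G. act_SVLM g \<rho> (adj ?s h) = adj ?s h"
        proof
          fix g assume g: "g \<in> G"
          have "act_SVMs g \<rho> ?s = ?s" using sinv g by (simp add: SVMs_inv_def)
          then show "act_SVLM g \<rho> (adj ?s h) = adj ?s h"
            using adj_invariant h g rho_inv[OF grp rep g] by blast
        qed
      next
        fix h :: "'m set \<Rightarrow> ('a, 'n) mpoly" and d :: nat
        assume "homog_form d h" "d > 0"
        then show "homog_form (d + e - 1) (adj ?s h)" using adj_homog he by blast
      next
        show "e > 0" using False by simp
      qed
    qed
    show "dstar ?s \<omega> \<in> harmonics G \<rho>"
      unfolding harmonics_def
    proof (intro CollectI ballI)
      fix \<xi> assume xi: "\<xi> \<in> JM G \<rho>"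
      have "pairing (dstar ?s \<omega>) \<xi> = pairing \<omega> (adj ?s \<xi>)" by (rule adjoint)
      also have "\<dots> = 0" using w adjJM[OF xi] by (simp add: harmonics_def)
      finally show "pairing (dstar ?s \<omega>) \<xi> = 0" .
    qed
  qed
qed

end
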